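(* Let $q\in(0,1)$ and $s\in[0,1]$. Let $H=\mathcal{O}(SU_q(2))$ be the Hopf $*$-algebra generated by $\alpha,\gamma$ with relations $$\alpha\gamma=q\gamma\alpha,\quad \alpha\gamma^*=q\gamma^*\alpha,\quad \gamma\gamma^*=\gamma^*\gamma,\quad \alpha^*\alpha+\gamma^*\gamma=1,\quad \alpha\alpha^*+q^2\gamma\gamma^*=1,$$ and counit $\varepsilon(\alpha)=1$, $\varepsilon(\gamma)=0$. Let $B=\mathcal{O}(S^2_{q,s})\subseteq H$ be the $*$-subalgebra generated by $$K=s(\gamma\alpha+\alpha^*\gamma^* )+(1-s^2)\gamma^*\gamma,\qquad L=s(\alpha^2-q\gamma^{*2})+(1-s^2)\alpha\gamma^*.$$ Let $\{e_n\}_{n\ge0}$ be an orthonormal basis of a separable Hilbert space (with $e_{-1}:=0$) and $\pi_\pm$ the bounded $*$-representations of $B$ given by $$\pi_-(K)e_n=-s^2q^{2n}e_n,\quad \pi_-(L)e_n=s\sqrt{1-(1-s^2)q^{2n}-s^2q^{4n}}\;e_{n-1},$$ $$\pi_+(K)e_n=q^{2n}e_n,\quad \pi_+(L)e_n=\sqrt{s^2+(1-s^2)q^{2n}-q^{4n}}\;e_{n-1};$$ then $\mathrm{tr}_\pi:=\mathrm{Tr}\circ(\pi_--\pi_+)$ is a well-defined trace on $B$. Then the image of the positive cone of $K_0(B)$ (the classes of finitely generated projective left $B$-modules) under the group homomorphism $$(\varepsilon,\mathrm{tr}_\pi):K_0(B)\to\mathbb{Z}\times\mathbb{Z},\qquad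 [M]\mapsto(\langle\varepsilon,[M]\rangle,\langle\mathrm{tr}_\pi,[M]\rangle)$$ contains $\mathbb{Z}_+\times\mathbb{Z}$, where $\mathbb{Z}_+=\{1,2,3,\dots\}$ and $\varepsilon$ is restricted to $B$.
   Context: $\mathrm{Tr}$ denotes the operator trace. For a trace $\tau$ on $B$ (e.g. the character $\varepsilon|_B$ or $\mathrm{tr}_\pi$) and a finitely generated projective left $B$-module $M\cong B^nE$ with $E=(E_{ij})\in M_n(B)$ idempotent, $\langle\tau,[M]\rangle:=\sum_{i=1}^n\tau(E_{ii})$; this depends only on $[M]\in K_0(B)$, and both pairings take integer values. *)

theory Defs
  imports "HOL-Analysis.Analysis"
begin

text \<open>An element of the free algebra is a finitely supported coefficient function on words.\<close>
type_synonym 'g ncpoly = "'g list \<Rightarrow> complex"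

definition fin_supp :: "'g ncpoly \<Rightarrow> bool" where
  "fin_supp p \<longleftrightarrow> finite {w. p w \<noteq> 0}"

definition nc_zero :: "'g ncpoly" where "nc_zero = (\<lambda>w. 0)"
definition nc_const :: "complex \<Rightarrow> 'g ncpoly" where
  "nc_const c = (\<lambda>w. if w = [] then c else 0)"
definition nc_mono :: "'g list \<Rightarrow> 'g ncpoly" where
  "nc_mono u = (\<lambda>w. if w = u then 1 else 0)"
definition nc_add :: "'g ncpoly \<Rightarrow> 'g ncpoly \<Rightarrow> 'g ncpoly" where
  "nc_add p r = (\<lambda>w. p w + r w)"
definition nc_smult :: "complex \<Rightarrow> 'g ncpoly \<Rightarrow> 'g ncpoly" where
  "nc_smult c p = (\<lambda>w. c * p w)"
definition nc_sub :: "'g ncpoly \<Rightarrow> 'g ncpoly \<Rightarrow> 'g ncpoly" where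
  "nc_sub p r = (\<lambda>w. p w - r w)"
definition nc_mult :: "'g ncpoly \<Rightarrow> 'g ncpoly \<Rightarrow> 'g ncpoly" where
  "nc_mult p r = (\<lambda>w. \<Sum>i\<le>length w. p (take i w) * r (drop i w))"
definition nc_star :: "('g \<Rightarrow> 'g) \<Rightarrow> 'g ncpoly \<Rightarrow> 'g ncpoly" where
  "nc_star iv p = (\<lambda>w. cnj (p (rev (map iv w))))"

datatype hgen = Al | AlS | Ga | GaS

fun hstar :: "hgen \<Rightarrow> hgen" where
  "hstar Al = AlS" | "hstar AlS = Al" | "hstar Ga = GaS" | "hstar GaS = Ga"

definition suq_rels0 :: "real \<Rightarrow> hgen ncpoly set" where
  "suq_rels0 q = {
     nc_sub (nc_mono [Al,Ga]) (nc_smult (complex_of_real q) (nc_mono [Ga,Al])),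
     nc_sub (nc_mono [Al,GaS]) (nc_smult (complex_of_real q) (nc_mono [GaS,Al])),
     nc_sub (nc_mono [Ga,GaS]) (nc_mono [GaS,Ga]),
     nc_sub (nc_add (nc_mono [AlS,Al]) (nc_mono [GaS,Ga])) (nc_const 1),
     nc_sub (nc_add (nc_mono [Al,AlS]) (nc_smult (complex_of_real (q^2)) (nc_mono [Ga,GaS]))) (nc_const 1)}"

text \<open>Since the relations hold in a *-algebra, their adjoints hold as well.\<close>
definition suq_rels :: "real \<Rightarrow> hgen ncpoly set" where
  "suq_rels q = suq_rels0 q \<union> nc_star hstar ` suq_rels0 q"

text \<open>Two-sided ideal of the free algebra generated by the relations; H = free algebra / ideal.\<close>
inductive_set suq_ideal :: "real \<Rightarrow> hgen ncpoly set" for q :: real where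
  zero: "nc_zero \<in> suq_ideal q"
| add: "x \<in> suq_ideal q \<Longrightarrow> y \<in> suq_ideal q \<Longrightarrow> nc_add x y \<in> suq_ideal q"
| gen: "r \<in> suq_rels q \<Longrightarrow>
          nc_smult c (nc_mult (nc_mult (nc_mono u) r) (nc_mono v)) \<in> suq_ideal q"

text \<open>Counit: the algebra homomorphism with alpha, alpha* |-> 1 and gamma, gamma* |-> 0
  (well defined on the quotient).\<close>
fun eps_gen :: "hgen \<Rightarrow> complex" where
  "eps_gen Al = 1" | "eps_gen AlS = 1" | "eps_gen Ga = 0" | "eps_gen GaS = 0"

definition hcounit :: "hgen ncpoly \<Rightarrow> complex" where
  "hcounit p = (\<Sum>w | p w \<noteq> 0. p w * prod_list (map eps_gen w))"

definition Kel :: "real \<Rightarrow> real \<Rightarrow> hgen ncpoly" where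
  "Kel s q = nc_add
      (nc_smult (complex_of_real s) (nc_add (nc_mono [Ga,Al]) (nc_mono [AlS,GaS])))
      (nc_smult (complex_of_real (1 - s^2)) (nc_mono [GaS,Ga]))"

definition Lel :: "real \<Rightarrow> real \<Rightarrow> hgen ncpoly" where
  "Lel s q = nc_add
      (nc_smult (complex_of_real s)
          (nc_sub (nc_mono [Al,Al]) (nc_smult (complex_of_real q) (nc_mono [GaS,GaS]))))
      (nc_smult (complex_of_real (1 - s^2)) (nc_mono [Al,GaS]))"

datatype bgen = Kg | KgS | Lg | LgS

fun bgen_img :: "real \<Rightarrow> real \<Rightarrow> bgen \<Rightarrow> hgen ncpoly" where
  "bgen_img s q Kg = Kel s q"
| "bgen_img s q KgS = nc_star hstar (Kel s q)"
| "bgen_img s q Lg = Lel s q"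
| "bgen_img s q LgS = nc_star hstar (Lel s q)"

definition bword_img :: "real \<Rightarrow> real \<Rightarrow> bgen list \<Rightarrow> hgen ncpoly" where
  "bword_img s q w = foldr (\<lambda>x acc. nc_mult (bgen_img s q x) acc) w (nc_const 1)"

text \<open>The inclusion: a noncommutative polynomial in K,K*,L,L* gives an element of B \<subseteq> H.
  Every element of B arises this way.\<close>
definition bincl :: "real \<Rightarrow> real \<Rightarrow> bgen ncpoly \<Rightarrow> hgen ncpoly" where
  "bincl s q f = (\<lambda>v. \<Sum>w | f w \<noteq> 0. f w * bword_img s q w v)"

text \<open>An operator T is recorded by its matrix entries T m n = <T e_n, e_m>.\<close>
type_synonym imat = "nat \<Rightarrow> nat \<Rightarrow> complex"

definition mat_id :: imat where "mat_id = (\<lambda>m n. if m = n then 1 else 0)"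
definition mat_mult :: "imat \<Rightarrow> imat \<Rightarrow> imat" where
  "mat_mult A B = (\<lambda>m n. infsum (\<lambda>k. A m k * B k n) UNIV)"
definition mat_adj :: "imat \<Rightarrow> imat" where
  "mat_adj A = (\<lambda>m n. cnj (A n m))"

definition piK_minus :: "real \<Rightarrow> real \<Rightarrow> imat" where
  "piK_minus s q = (\<lambda>m n. if m = n then complex_of_real (- (s^2 * q^(2*n))) else 0)"
definition piL_minus :: "real \<Rightarrow> real \<Rightarrow> imat" where
  "piL_minus s q = (\<lambda>m n. if Suc m = n
      then complex_of_real (s * sqrt (1 - (1 - s^2) * q^(2*n) - s^2 * q^(4*n))) else 0)"
definition piK_plus :: "real \<Rightarrow> real \<Rightarrow> imat" where
  "piK_plus s q = (\<lambda>m n. if m = n then complex_of_real (q^(2*n)) else 0)"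
definition piL_plus :: "real \<Rightarrow> real \<Rightarrow> imat" where
  "piL_plus s q = (\<lambda>m n. if Suc m = n
      then complex_of_real (sqrt (s^2 + (1 - s^2) * q^(2*n) - q^(4*n))) else 0)"

fun rep_gen :: "imat \<Rightarrow> imat \<Rightarrow> bgen \<Rightarrow> imat" where
  "rep_gen TK TL Kg = TK"
| "rep_gen TK TL KgS = mat_adj TK"
| "rep_gen TK TL Lg = TL"
| "rep_gen TK TL LgS = mat_adj TL"

definition rep_word :: "imat \<Rightarrow> imat \<Rightarrow> bgen list \<Rightarrow> imat" where
  "rep_word TK TL w = foldr (\<lambda>x acc. mat_mult (rep_gen TK TL x) acc) w mat_id"

definition rep :: "imat \<Rightarrow> imat \<Rightarrow> bgen ncpoly \<Rightarrow> imat" where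
  "rep TK TL f = (\<lambda>m n. \<Sum>w | f w \<noteq> 0. f w * rep_word TK TL w m n)"

definition pi_minus :: "real \<Rightarrow> real \<Rightarrow> bgen ncpoly \<Rightarrow> imat" where
  "pi_minus s q = rep (piK_minus s q) (piL_minus s q)"
definition pi_plus :: "real \<Rightarrow> real \<Rightarrow> bgen ncpoly \<Rightarrow> imat" where
  "pi_plus s q = rep (piK_plus s q) (piL_plus s q)"

text \<open>tr_pi = Tr o (pi_- - pi_+), the operator trace of a trace-class operator being the
  (absolutely convergent) sum of its diagonal entries in the orthonormal basis.\<close>
definition trpi :: "real \<Rightarrow> real \<Rightarrow> bgen ncpoly \<Rightarrow> complex" where
  "trpi s q f = infsum (\<lambda>n. pi_minus s q f n n - pi_plus s q f n n) UNIV"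

definition B_idempotent :: "real \<Rightarrow> real \<Rightarrow> nat \<Rightarrow> (nat \<Rightarrow> nat \<Rightarrow> bgen ncpoly) \<Rightarrow> bool" where
  "B_idempotent s q n E \<longleftrightarrow>
     (\<forall>i<n. \<forall>j<n. fin_supp (E i j)) \<and>
     (\<forall>i<n. \<forall>j<n.
        nc_sub (\<lambda>w. \<Sum>k<n. nc_mult (bincl s q (E i k)) (bincl s q (E k j)) w)
               (bincl s q (E i j)) \<in> suq_ideal q)"

end

theory Submission
  imports Defs "HOL-Library.Poly_Mapping" "HOL-Computational_Algebra.Polynomial"
begin


instantiation list :: (type) monoid_add
begin
definition zero_list_def: "0 = []"
definition plus_list_def: "(xs::'a list) + ys = xs @ ys"
instance by standard (simp_all add: zero_list_def plus_list_def)
end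

type_synonym hp = "hgen list \<Rightarrow>\<^sub>0 complex"

lemma prod_fun_list:
  fixes f g :: "'a list \<Rightarrow> complex"
  assumes "finite {a. f a \<noteq> 0}" "finite {b. g b \<noteq> 0}"
  shows "prod_fun f g w = (\<Sum>i\<le>length w. f (take i w) * g (drop i w))"
proof -
  have "prod_fun f g w = (\<Sum>(a, b). f a * g b when w = a + b)"
    by (rule prod_fun_unfold_prod[OF assms])
  also have "\<dots> = (\<Sum>ab\<in>(\<lambda>i. (take i w, drop i w)) ` {..length w}. (case ab of (a,b) \<Rightarrow> f a * g b when w = a + b))"
  proof (rule Sum_any.expand_superset)
    show "{ab. (case ab of (a, b) \<Rightarrow> f a * g b when w = a + b) \<noteq> 0} \<subseteq> (\<lambda>i. (take i w, drop i w)) ` {..length w}"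
    proof
      fix ab assume "ab \<in> {ab. (case ab of (a, b) \<Rightarrow> f a * g b when w = a + b) \<noteq> 0}"
      then obtain a b where ab: "ab = (a,b)" "w = a @ b" by (cases ab) (auto simp: plus_list_def)
      then show "ab \<in> (\<lambda>i. (take i w, drop i w)) ` {..length w}"
        by (intro image_eqI[where x="length a"]) auto
    qed
  qed simp
  also have "\<dots> = (\<Sum>i\<le>length w. f (take i w) * g (drop i w))"
  proof (subst sum.reindex)
    show "inj_on (\<lambda>i. (take i w, drop i w)) {..length w}"
      by (rule inj_onI) (metis Pair_inject atMost_iff length_take min.absorb2)
  qed (simp add: plus_list_def)
  finally show ?thesis .
qed

lemma lookup_times_nc: "Poly_Mapping.lookup (X * Y) = nc_mult (Poly_Mapping.lookup X) (Poly_Mapping.lookup Y)"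
proof (rule ext)
  fix w
  have "Poly_Mapping.lookup (X * Y) w = prod_fun (Poly_Mapping.lookup X) (Poly_Mapping.lookup Y) w" by (metis times_poly_mapping.rep_eq)
  also have "\<dots> = (\<Sum>i\<le>length w. Poly_Mapping.lookup X (take i w) * Poly_Mapping.lookup Y (drop i w))"
    by (rule prod_fun_list) (simp_all add: finite_lookup)
  finally show "Poly_Mapping.lookup (X * Y) w = nc_mult (Poly_Mapping.lookup X) (Poly_Mapping.lookup Y) w" by (simp add: nc_mult_def)
qed

abbreviation lk :: "hp \<Rightarrow> hgen list \<Rightarrow> complex" where "lk \<equiv> Poly_Mapping.lookup"
abbreviation sg :: "hgen list \<Rightarrow> complex \<Rightarrow> hp" where "sg \<equiv> Poly_Mapping.single"

lemma sg_mult: "sg u c * sg v d = sg (u @ v) (c * d)"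
  by (simp add: mult_single plus_list_def)

lemma sg_one: "sg [] 1 = 1"
  using single_one[where 'a="hgen list"] by (simp add: zero_list_def)

lemma lk_sg: "lk (sg u c) w = (if u = w then c else 0)"
  by (simp add: lookup_single when_def)

lemma pm_expand: "(Z::hp) = (\<Sum>k\<in>Poly_Mapping.keys Z. sg k (lk Z k))"
proof -
  have *: "finite I \<Longrightarrow> lk (\<Sum>k\<in>I. sg k (lk Z k)) j = (if j \<in> I then lk Z j else 0)" for I j
    by (induction I rule: finite_induct) (auto simp: lookup_single lookup_add when_def)
  show ?thesis by (rule poly_mapping_eqI) (auto simp: * in_keys_iff)
qed

inductive_set Jr :: "real \<Rightarrow> hp set" for q :: real where
  zero: "0 \<in> Jr q"
| add: "x \<in> Jr q \<Longrightarrow> y \<in> Jr q \<Longrightarrow> x + y \<in> Jr q"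
| gen: "lk r \<in> suq_rels q \<Longrightarrow> sg u c * r * sg v 1 \<in> Jr q"

lemma nc_mult_smult_left: "nc_mult (nc_smult c p) r = nc_smult c (nc_mult p r)"
  by (rule ext) (simp add: nc_mult_def nc_smult_def sum_distrib_left mult.assoc)

lemma lk_sg_nc: "lk (sg u c) = nc_smult c (nc_mono u)"
  by (rule ext) (simp add: lk_sg nc_smult_def nc_mono_def)

lemma Jr_sound: "x \<in> Jr q \<Longrightarrow> lk x \<in> suq_ideal q"
proof (induction rule: Jr.induct)
  case zero
  then show ?case using suq_ideal.zero by (simp add: nc_zero_def[symmetric] fun_eq_iff)
next
  case (add x y)
  have "lk (x + y) = nc_add (lk x) (lk y)" by (rule ext) (simp add: lookup_add nc_add_def)
  then show ?case using add suq_ideal.add by simp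
next
  case (gen r u c v)
  have "lk (sg u c * r * sg v 1) = nc_smult c (nc_mult (nc_mult (nc_mono u) (lk r)) (nc_mono v))"
    by (simp add: lookup_times_nc lk_sg_nc nc_mult_smult_left)
       (simp add: nc_smult_def)
  then show ?case using gen suq_ideal.gen by simp
qed

lemma Jr_sum: "finite I \<Longrightarrow> (\<And>i. i \<in> I \<Longrightarrow> f i \<in> Jr q) \<Longrightarrow> sum f I \<in> Jr q"
  by (induction I rule: finite_induct) (auto intro: Jr.intros)

lemma Jr_uminus: "x \<in> Jr q \<Longrightarrow> - x \<in> Jr q"
proof (induction rule: Jr.induct)
  case (gen r u c v)
  have "- (sg u c * r * sg v 1) = sg u (-c) * r * sg v 1" by (simp add: single_uminus)
  then show ?case using gen Jr.gen by metis
next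
  case (add x y)
  then have "-x + -y \<in> Jr q" by (intro Jr.add)
  then show ?case by simp
qed (auto intro: Jr.intros)

lemma Jr_diff: "x \<in> Jr q \<Longrightarrow> y \<in> Jr q \<Longrightarrow> x - y \<in> Jr q"
  using Jr.add[OF _ Jr_uminus] by (metis diff_conv_add_uminus)

lemma Jr_mult_left: "x \<in> Jr q \<Longrightarrow> Z * x \<in> Jr q"
proof (induction rule: Jr.induct)
  case zero then show ?case by (simp add: Jr.zero)
next
  case (add x y) then show ?case by (simp add: distrib_left Jr.add)
next
  case (gen r u c v)
  have "Z * (sg u c * r * sg v 1) = (\<Sum>k\<in>Poly_Mapping.keys Z. sg k (lk Z k) * (sg u c * r * sg v 1))"
    by (subst pm_expand[of Z]) (simp add: sum_distrib_right)
  also have "\<dots> = (\<Sum>k\<in>Poly_Mapping.keys Z. sg (k @ u) (lk Z k * c) * r * sg v 1)"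
    by (simp add: mult.assoc[symmetric] sg_mult)
  also have "\<dots> \<in> Jr q" by (rule Jr_sum) (auto intro: Jr.gen gen)
  finally show ?case .
qed

lemma sc_comm: "sg [] d * X = X * sg [] d"
proof (rule poly_mapping_eqI)
  fix w
  have a: "(\<Sum>i\<le>length w. (if i = 0 \<or> w = [] then d else 0) * lk X (drop i w)) = d * lk X w"
    by (cases w) (simp_all add: sum.atMost_Suc_shift del: sum.atMost_Suc)
  have b: "(\<Sum>i\<le>length w. lk X (take i w) * (if length w = i then d else 0)) = d * lk X w"
  proof -
    have "(\<Sum>i\<le>length w. lk X (take i w) * (if length w = i then d else 0)) =
          (\<Sum>i\<in>{length w}. lk X (take i w) * (if length w = i then d else 0))"
      by (rule sum.mono_neutral_right) auto
    then show ?thesis by simp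
  qed
  show "lk (sg [] d * X) w = lk (X * sg [] d) w"
    by (simp add: lookup_times_nc nc_mult_def lk_sg a b)
qed

lemma Jr_genI: "lk r \<in> suq_rels q \<Longrightarrow> sg u c * r * sg v d \<in> Jr q"
proof -
  assume r: "lk r \<in> suq_rels q"
  have "sg u c * r * sg v d = sg u (c * d) * r * sg v 1"
  proof -
    have "sg u c * r * sg v d = sg u c * r * (sg [] d * sg v 1)" by (simp add: sg_mult)
    also have "\<dots> = sg u c * sg [] d * r * sg v 1" by (simp add: sc_comm mult.assoc)
    also have "\<dots> = sg u (c * d) * r * sg v 1" by (simp add: sg_mult)
    finally show ?thesis .
  qed
  then show ?thesis using Jr.gen[OF r] by simp
qed

lemma Jr_mult_right: "x \<in> Jr q \<Longrightarrow> x * Z \<in> Jr q"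
proof (induction rule: Jr.induct)
  case zero then show ?case by (simp add: Jr.zero)
next
  case (add x y) then show ?case by (simp add: distrib_right Jr.add)
next
  case (gen r u c v)
  have "(sg u c * r * sg v 1) * Z = (\<Sum>k\<in>Poly_Mapping.keys Z. (sg u c * r * sg v 1) * sg k (lk Z k))"
    by (subst pm_expand[of Z]) (simp add: sum_distrib_left)
  also have "\<dots> = (\<Sum>k\<in>Poly_Mapping.keys Z. sg u c * r * sg (v @ k) (lk Z k))"
    by (simp add: mult.assoc sg_mult)
  also have "\<dots> \<in> Jr q" by (rule Jr_sum) (auto intro: Jr_genI gen)
  finally show ?case .
qed

definition cg :: "real \<Rightarrow> hp \<Rightarrow> hp \<Rightarrow> bool" where "cg q x y \<longleftrightarrow> x - y \<in> Jr q"

lemma cg_refl[simp]: "cg q x x" by (simp add: cg_def Jr.zero)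
lemma cg_sym: "cg q x y \<Longrightarrow> cg q y x"
  unfolding cg_def using Jr_uminus by fastforce
lemma cg_trans[trans]: "cg q x y \<Longrightarrow> cg q y z \<Longrightarrow> cg q x z"
  unfolding cg_def using Jr.add by fastforce
lemma cg_eq_trans[trans]: "x = y \<Longrightarrow> cg q y z \<Longrightarrow> cg q x z" by simp
lemma cg_trans_eq[trans]: "cg q x y \<Longrightarrow> y = z \<Longrightarrow> cg q x z" by simp
lemma cg_add: "cg q x y \<Longrightarrow> cg q x' y' \<Longrightarrow> cg q (x + x') (y + y')"
  unfolding cg_def using Jr.add by (fastforce simp: algebra_simps)
lemma cg_diff: "cg q x y \<Longrightarrow> cg q x' y' \<Longrightarrow> cg q (x - x') (y - y')"
  unfolding cg_def using Jr_diff by (fastforce simp: algebra_simps)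
lemma cg_multL: "cg q x y \<Longrightarrow> cg q (Z * x) (Z * y)"
  unfolding cg_def using Jr_mult_left by (fastforce simp: algebra_simps)
lemma cg_multR: "cg q x y \<Longrightarrow> cg q (x * Z) (y * Z)"
  unfolding cg_def using Jr_mult_right by (fastforce simp: algebra_simps)
lemma cg_mult: "cg q x y \<Longrightarrow> cg q x' y' \<Longrightarrow> cg q (x * x') (y * y')"
  by (meson cg_multL cg_multR cg_trans)
lemma cg_sum: "finite I \<Longrightarrow> (\<And>i. i \<in> I \<Longrightarrow> cg q (f i) (g i)) \<Longrightarrow> cg q (sum f I) (sum g I)"
  by (induction I rule: finite_induct) (auto intro: cg_add)


definition "r1 q = sg [Al,Ga] 1 - sg [Ga,Al] (of_real q)"
definition "r2 q = sg [Al,GaS] 1 - sg [GaS,Al] (of_real q)"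
definition "r3 (q::real) = sg [Ga,GaS] 1 - sg [GaS,Ga] 1"
definition "r4 (q::real) = sg [AlS,Al] 1 + sg [GaS,Ga] 1 - sg [] 1"
definition "r5 q = sg [Al,AlS] 1 + sg [Ga,GaS] (of_real (q^2)) - sg [] 1"
definition "r6 q = sg [GaS,AlS] 1 - sg [AlS,GaS] (of_real q)"
definition "r7 q = sg [Ga,AlS] 1 - sg [AlS,Ga] (of_real q)"

lemma hstar_inv[simp]: "hstar (hstar x) = x" by (cases x) auto
lemma hstar_eq: "hstar x = y \<longleftrightarrow> x = hstar y" by (cases x; cases y) auto
lemma rev_map_hstar_eq: "rev (map hstar w) = u \<longleftrightarrow> w = rev (map hstar u)"
  by (auto simp: rev_map comp_def)

lemma lk_minus: "lk (x - y) w = lk x w - lk y w" by (simp add: lookup_minus)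
lemma lk_add: "lk (x + y) w = lk x w + lk y w" by (simp add: lookup_add)

lemmas lk_simps = lk_minus lk_add lk_sg

lemma rels_in:
  "lk (r1 q) \<in> suq_rels q" "lk (r2 q) \<in> suq_rels q" "lk (r3 q) \<in> suq_rels q"
  "lk (r4 q) \<in> suq_rels q" "lk (r5 q) \<in> suq_rels q" "lk (r6 q) \<in> suq_rels q"
  "lk (r7 q) \<in> suq_rels q"
proof -
  let ?e1 = "nc_sub (nc_mono [Al,Ga]) (nc_smult (complex_of_real q) (nc_mono [Ga,Al]))"
  let ?e2 = "nc_sub (nc_mono [Al,GaS]) (nc_smult (complex_of_real q) (nc_mono [GaS,Al]))"
  have "lk (r1 q) = ?e1" by (rule ext) (simp add: r1_def lk_simps nc_sub_def nc_smult_def nc_mono_def)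
  then show "lk (r1 q) \<in> suq_rels q" by (simp add: suq_rels_def suq_rels0_def)
  have "lk (r2 q) = ?e2" by (rule ext) (simp add: r2_def lk_simps nc_sub_def nc_smult_def nc_mono_def)
  then show "lk (r2 q) \<in> suq_rels q" by (simp add: suq_rels_def suq_rels0_def)
  have "lk (r3 q) = nc_sub (nc_mono [Ga,GaS]) (nc_mono [GaS,Ga])"
    by (rule ext) (simp add: r3_def lk_simps nc_sub_def nc_smult_def nc_mono_def)
  then show "lk (r3 q) \<in> suq_rels q" by (simp add: suq_rels_def suq_rels0_def)
  have "lk (r4 q) = nc_sub (nc_add (nc_mono [AlS,Al]) (nc_mono [GaS,Ga])) (nc_const 1)"
    by (rule ext) (simp add: r4_def lk_simps nc_sub_def nc_add_def nc_const_def nc_mono_def)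
  then show "lk (r4 q) \<in> suq_rels q" by (simp add: suq_rels_def suq_rels0_def)
  have "lk (r5 q) = nc_sub (nc_add (nc_mono [Al,AlS]) (nc_smult (complex_of_real (q^2)) (nc_mono [Ga,GaS]))) (nc_const 1)"
    by (rule ext) (simp add: r5_def lk_simps nc_sub_def nc_add_def nc_smult_def nc_const_def nc_mono_def)
  then show "lk (r5 q) \<in> suq_rels q" by (simp add: suq_rels_def suq_rels0_def)
  have "lk (r6 q) = nc_star hstar ?e1"
    by (rule ext) (auto simp: r6_def lk_simps nc_star_def nc_sub_def nc_smult_def nc_mono_def rev_map_hstar_eq hstar_eq)
  then show "lk (r6 q) \<in> suq_rels q" by (simp add: suq_rels_def suq_rels0_def)
  have "lk (r7 q) = nc_star hstar ?e2"
    by (rule ext) (auto simp: r7_def lk_simps nc_star_def nc_sub_def nc_smult_def nc_mono_def rev_map_hstar_eq hstar_eq)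
  then show "lk (r7 q) \<in> suq_rels q" by (simp add: suq_rels_def suq_rels0_def)
qed

definition "Kr s (q::real) = sg [Ga,Al] (of_real s) + sg [AlS,GaS] (of_real s) + sg [GaS,Ga] (1 - of_real s ^ 2)"
definition "Lr s q = sg [Al,Al] (of_real s) - sg [GaS,GaS] (of_real s * of_real q) + sg [Al,GaS] (1 - of_real s ^ 2)"
definition "Lsr s q = sg [AlS,AlS] (of_real s) - sg [Ga,Ga] (of_real s * of_real q) + sg [Ga,AlS] (1 - of_real s ^ 2)"

definition pm_of :: "(hgen list \<times> complex) list \<Rightarrow> hp" where
  "pm_of xs = sum_list (map (\<lambda>(w,c). sg w c) xs)"
definition lmul :: "(hgen list \<times> complex) list \<Rightarrow> (hgen list \<times> complex) list \<Rightarrow> (hgen list \<times> complex) list" where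
  "lmul xs ys = concat (map (\<lambda>(u,c). map (\<lambda>(v,d). (u @ v, c * d)) ys) xs)"
definition negl :: "(hgen list \<times> complex) list \<Rightarrow> (hgen list \<times> complex) list" where
  "negl xs = map (\<lambda>(w,c). (w, - c)) xs"
fun ins :: "hgen list \<times> complex \<Rightarrow> (hgen list \<times> complex) list \<Rightarrow> (hgen list \<times> complex) list" where
  "ins (w,c) [] = [(w,c)]"
| "ins (w,c) ((v,d) # r) = (if w = v then (v, c + d) # r else (v,d) # ins (w,c) r)"
definition collect :: "(hgen list \<times> complex) list \<Rightarrow> (hgen list \<times> complex) list" where
  "collect xs = foldr ins xs []"

lemma lmul_Nil[simp]: "lmul [] ys = []" by (simp add: lmul_def)
lemma lmul_Cons[simp]: "lmul ((u,c) # xs) ys = map (\<lambda>(v,d). (u @ v, c * d)) ys @ lmul xs ys"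
  by (simp add: lmul_def)
lemma negl_simps[simp]: "negl [] = []" "negl ((w,c) # xs) = (w, -c) # negl xs" by (simp_all add: negl_def)

lemma pm_of_append: "pm_of xs + pm_of ys = pm_of (xs @ ys)" by (simp add: pm_of_def)
lemma pm_of_single: "sg u c = pm_of [(u,c)]" by (simp add: pm_of_def)
lemma pm_of_neg: "pm_of (negl xs) = - pm_of xs"
  by (induction xs) (auto simp: pm_of_def negl_def single_uminus)
lemma pm_of_diff: "pm_of xs - pm_of ys = pm_of (xs @ negl ys)"
  by (simp add: pm_of_append[symmetric] pm_of_neg)
lemma pm_of_mul: "pm_of xs * pm_of ys = pm_of (lmul xs ys)"
proof (induction xs)
  case Nil then show ?case by (simp add: pm_of_def)
next
  case (Cons x xs)
  obtain u c where x: "x = (u,c)" by (cases x)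
  have "pm_of [(u,c)] * pm_of ys = pm_of (map (\<lambda>(v,d). (u @ v, c * d)) ys)"
    by (induction ys) (auto simp: pm_of_def distrib_left sg_mult)
  moreover have "pm_of (x # xs) = pm_of [(u,c)] + pm_of xs" by (simp add: pm_of_def x)
  ultimately have "pm_of (x # xs) * pm_of ys = pm_of (map (\<lambda>(v,d). (u @ v, c * d)) ys) + pm_of (lmul xs ys)"
    using Cons by (simp add: distrib_right)
  then show ?case by (simp add: x pm_of_append)
qed
lemma pm_of_ins: "pm_of (ins x r) = pm_of (x # r)"
  by (induction x r rule: ins.induct) (auto simp: pm_of_def single_add algebra_simps)
lemma pm_of_collect: "pm_of (collect xs) = pm_of xs"
proof (induction xs)
  case Nil then show ?case by (simp add: collect_def)
next
  case (Cons x xs)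
  have "pm_of (collect (x # xs)) = pm_of (x # collect xs)" by (simp add: collect_def pm_of_ins)
  also have "\<dots> = pm_of (x # xs)" using Cons by (simp add: pm_of_def)
  finally show ?case .
qed
lemma pm_of_zero: "list_all (\<lambda>(w,c). c = 0) xs \<Longrightarrow> pm_of xs = 0"
  by (induction xs) (auto simp: pm_of_def)
lemma pm_eqI: "list_all (\<lambda>(w,c). c = 0) (collect (xs @ negl ys)) \<Longrightarrow> pm_of xs = pm_of ys"
  using pm_of_zero[of "collect (xs @ negl ys)"] by (simp add: pm_of_collect pm_of_diff[symmetric])

lemmas to_pm = pm_of_single pm_of_append pm_of_diff pm_of_mul



lemma B1:
  assumes "q > 0"
  shows "cg q (Lr s q * Kr s q) (sg [] (of_real q ^ 2) * Kr s q * Lr s q)"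
proof -
  have q0: "complex_of_real q \<noteq> 0" using assms by simp
  have "Lr s q * Kr s q - (sg [] (of_real q ^ 2) * Kr s q * Lr s q) =
    sg [GaS] (- (of_real q^1 * of_real s^2)) * r6 q * sg [GaS] 1
    + sg [] (- (of_real q^2 * of_real s^2)) * r6 q * sg [GaS,GaS] 1
    + sg [GaS,GaS] ((of_real q^1 * of_real s^1) - (of_real q^1 * of_real s^3)) * r3 q * sg [] 1
    + sg [GaS] ((of_real q^1 * of_real s^1) - (of_real q^1 * of_real s^3)) * r3 q * sg [GaS] 1
    + sg [GaS] ((of_real q^1 * of_real s^2)) * r3 q * sg [Al] 1
    + sg [] (- (of_real q^3 * of_real s^1) + (of_real q^3 * of_real s^3)) * r3 q * sg [GaS,GaS] 1
    + sg [Al] ((of_real s^1) - (of_real s^3)) * r6 q * sg [GaS] 1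
    + sg [] ((of_real q^1 * of_real s^1) - (of_real q^1 * of_real s^3)) * r5 q * sg [GaS,GaS] 1
    + sg [Al,GaS] (- (1) + (2 * of_real s^2) - (of_real s^4)) * r3 q * sg [] 1
    + sg [Al] (- (1) + (2 * of_real s^2) - (of_real s^4)) * r3 q * sg [GaS] 1
    + sg [Al] (- (of_real s^1) + (of_real s^3)) * r3 q * sg [Al] 1
    + sg [Al] ((of_real s^2)) * r5 q * sg [GaS] 1
    + sg [Al,Al] (- (of_real s^1) + (of_real s^3)) * r3 q * sg [] 1
    + sg [Al] ((of_real s^1) - (of_real s^3)) * r1 q * sg [GaS] 1
    + sg [Ga] ((of_real q^1) - (2 * of_real q^1 * of_real s^2) + (of_real q^1 * of_real s^4)) * r2 q * sg [GaS] 1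
    + sg [] ((1) - (2 * of_real s^2) + (of_real s^4) - (of_real q^2 * of_real s^2)) * r1 q * sg [GaS,GaS] 1
    + sg [AlS] ((of_real q^1 * of_real s^1) - (of_real q^1 * of_real s^3)) * r2 q * sg [GaS] 1
    + sg [AlS] ((of_real q^1 * of_real s^2)) * r2 q * sg [Al] 1
    + sg [] (- (of_real q^1 * of_real s^1) + (of_real q^1 * of_real s^3)) * r4 q * sg [GaS,GaS] 1
    + sg [] (- (of_real q^1 * of_real s^2)) * r4 q * sg [GaS,Al] 1
    + sg [] ((of_real s^2)) * r2 q * sg [] 1
    + sg [] ((of_real q^2) - (2 * of_real q^2 * of_real s^2) + (of_real q^2 * of_real s^4)) * r3 q * sg [Al,GaS] 1
    + sg [] ((of_real q^2 * of_real s^1) - (of_real q^2 * of_real s^3)) * r3 q * sg [Al,Al] 1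
    + sg [Ga] ((of_real q^1 * of_real s^1) - (of_real q^1 * of_real s^3)) * r2 q * sg [Al] 1
    + sg [] ((of_real s^1) - (of_real s^3)) * r1 q * sg [GaS,Al] 1
    + sg [] ((of_real q^1 * of_real s^1) - (of_real q^1 * of_real s^3)) * r1 q * sg [Al,GaS] 1
    + sg [] ((of_real q^1 * of_real s^2)) * r1 q * sg [Al,Al] 1
    + sg [Al] ((of_real s^2)) * r1 q * sg [Al] 1"
    apply (simp only: Kr_def Lr_def Lsr_def r1_def r2_def r3_def r4_def r5_def r6_def r7_def to_pm)
    apply (rule pm_eqI)
    apply (simp add: collect_def)
    using q0 by (simp add: field_simps power2_eq_square power3_eq_cube power4_eq_xxxx)
  also have "\<dots> \<in> Jr q" by (intro Jr.add Jr_genI rels_in)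
  finally show ?thesis by (simp add: cg_def)
qed

lemma B4:
  assumes "q > 0"
  shows "cg q (Kr s q * Lsr s q) (sg [] (of_real q ^ 2) * Lsr s q * Kr s q)"
proof -
  have q0: "complex_of_real q \<noteq> 0" using assms by simp
  have "Kr s q * Lsr s q - (sg [] (of_real q ^ 2) * Lsr s q * Kr s q) =
    sg [AlS] ((of_real s^2)) * r6 q * sg [AlS] 1
    + sg [AlS,AlS] ((of_real q^1 * of_real s^2)) * r6 q * sg [] 1
    + sg [AlS] (- (of_real s^1) + (of_real s^3)) * r3 q * sg [AlS] 1
    + sg [AlS,Ga] ((of_real s^1) - (of_real s^3) + (of_real q^2 * of_real s^1) - (of_real q^2 * of_real s^3)) * r6 q * sg [] 1
    + sg [AlS] ((of_real q^1 * of_real s^1) - (of_real q^1 * of_real s^3)) * r7 q * sg [GaS] 1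
    + sg [AlS,Ga] ((of_real q^3) - (2 * of_real q^3 * of_real s^2) + (of_real q^3 * of_real s^4)) * r3 q * sg [] 1
    + sg [] (- (of_real s^1) + (of_real s^3)) * r3 q * sg [AlS,AlS] 1
    + sg [] (- (1) + (2 * of_real s^2) - (of_real s^4)) * r3 q * sg [Ga,AlS] 1
    + sg [Ga] ((of_real s^1) - (of_real s^3)) * r6 q * sg [AlS] 1
    + sg [] ((of_real q^1 * of_real s^1) - (of_real q^1 * of_real s^3)) * r7 q * sg [GaS,AlS] 1
    + sg [Ga] (- (1) + (2 * of_real s^2) - (of_real s^4) + (of_real q^2 * of_real s^2)) * r3 q * sg [AlS] 1
    + sg [Ga] ((of_real q^3 * of_real s^1) - (of_real q^3 * of_real s^3)) * r3 q * sg [Ga] 1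
    + sg [] (- (inverse (of_real q)^1 * of_real s^2)) * r1 q * sg [AlS,AlS] 1
    + sg [Al] ((inverse (of_real q)^1 * of_real s^2)) * r7 q * sg [AlS] 1
    + sg [] ((of_real s^2)) * r5 q * sg [Ga,AlS] 1
    + sg [] ((of_real s^2)) * r7 q * sg [] 1
    + sg [] (- (inverse (of_real q)^1 * of_real s^1) + (inverse (of_real q)^1 * of_real s^3)) * r1 q * sg [Ga,AlS] 1
    + sg [Al,Ga] ((inverse (of_real q)^1 * of_real s^1) - (inverse (of_real q)^1 * of_real s^3)) * r7 q * sg [] 1
    + sg [Al] ((of_real s^1) - (of_real s^3)) * r7 q * sg [Ga] 1
    + sg [] ((of_real q^1 * of_real s^1) - (of_real q^1 * of_real s^3)) * r5 q * sg [Ga,Ga] 1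
    + sg [Ga,Ga] ((1) - (2 * of_real s^2) + (of_real s^4) - (of_real q^2 * of_real s^2)) * r6 q * sg [] 1
    + sg [Ga] ((of_real q^1) - (2 * of_real q^1 * of_real s^2) + (of_real q^1 * of_real s^4)) * r7 q * sg [GaS] 1
    + sg [] ((of_real q^2) - (2 * of_real q^2 * of_real s^2) + (of_real q^2 * of_real s^4)) * r7 q * sg [Ga,GaS] 1
    + sg [AlS,AlS] ((of_real q^2 * of_real s^1) - (of_real q^2 * of_real s^3)) * r3 q * sg [] 1
    + sg [AlS,AlS] ((of_real q^1 * of_real s^2)) * r1 q * sg [] 1
    + sg [AlS] (- (of_real q^1 * of_real s^2)) * r4 q * sg [Ga] 1
    + sg [] (- (of_real q^2 * of_real s^1) + (of_real q^2 * of_real s^3)) * r7 q * sg [AlS,GaS] 1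
    + sg [] (- (of_real q^2) + (2 * of_real q^2 * of_real s^2) - (of_real q^2 * of_real s^4)) * r7 q * sg [GaS,Ga] 1
    + sg [] (- (of_real q^2 * of_real s^1) + (of_real q^2 * of_real s^3)) * r7 q * sg [Ga,Al] 1
    + sg [AlS,Ga] ((of_real q^2 * of_real s^1) - (of_real q^2 * of_real s^3)) * r1 q * sg [] 1
    + sg [AlS] ((of_real q^1 * of_real s^1) - (of_real q^1 * of_real s^3)) * r1 q * sg [Ga] 1
    + sg [] (- (of_real q^1 * of_real s^1) + (of_real q^1 * of_real s^3)) * r4 q * sg [Ga,Ga] 1
    + sg [Ga,Ga] (- (of_real q^2 * of_real s^2)) * r1 q * sg [] 1
    + sg [Ga] (- (of_real q^1 * of_real s^2)) * r1 q * sg [Ga] 1"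
    apply (simp only: Kr_def Lr_def Lsr_def r1_def r2_def r3_def r4_def r5_def r6_def r7_def to_pm)
    apply (rule pm_eqI)
    apply (simp add: collect_def)
    using q0 by (simp add: field_simps power2_eq_square power3_eq_cube power4_eq_xxxx)
  also have "\<dots> \<in> Jr q" by (intro Jr.add Jr_genI rels_in)
  finally show ?thesis by (simp add: cg_def)
qed

lemma B2:
  assumes "q > 0"
  shows "cg q (Lsr s q * Lr s q) (sg [] (of_real s ^ 2) + sg [] (1 - of_real s ^ 2) * Kr s q - Kr s q * Kr s q)"
proof -
  have q0: "complex_of_real q \<noteq> 0" using assms by simp
  have "Lsr s q * Lr s q - (sg [] (of_real s ^ 2) + sg [] (1 - of_real s ^ 2) * Kr s q - Kr s q * Kr s q) =
    sg [AlS] ((of_real s^1) - (of_real s^3)) * r4 q * sg [GaS] 1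
    + sg [AlS] ((of_real s^2)) * r4 q * sg [Al] 1
    + sg [] ((of_real s^2)) * r4 q * sg [] 1
    + sg [] ((1) - (of_real s^2) + (of_real s^4)) * r3 q * sg [] 1
    + sg [AlS] (- (1) + (2 * of_real s^2) - (of_real s^4)) * r1 q * sg [GaS] 1
    + sg [] ((1) - (2 * of_real s^2) + (of_real s^4)) * r4 q * sg [Ga,GaS] 1
    + sg [] ((1) - (2 * of_real s^2) + (of_real s^4)) * r3 q * sg [Ga,GaS] 1
    + sg [] ((1) - (2 * of_real s^2) + (of_real s^4)) * r7 q * sg [Al,GaS] 1
    + sg [] ((of_real s^1) - (of_real s^3)) * r7 q * sg [Al,Al] 1
    + sg [AlS] (- (of_real s^1) + (of_real s^3)) * r1 q * sg [Al] 1
    + sg [] ((of_real s^1) - (of_real s^3)) * r4 q * sg [Ga,Al] 1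
    + sg [Ga] ((of_real q^2 * of_real s^2)) * r3 q * sg [GaS] 1
    + sg [Ga] ((of_real s^1) - (of_real s^3)) * r1 q * sg [GaS] 1
    + sg [] ((inverse (of_real q)^1 * of_real s^1) - (inverse (of_real q)^1 * of_real s^3)) * r1 q * sg [Ga,GaS] 1
    + sg [Ga] ((of_real s^2)) * r1 q * sg [Al] 1
    + sg [AlS] ((of_real s^2)) * r6 q * sg [GaS] 1
    + sg [AlS,GaS] (- (of_real s^1) + (of_real s^3)) * r3 q * sg [] 1
    + sg [] (- (of_real s^1) + (of_real s^3)) * r3 q * sg [AlS,GaS] 1
    + sg [] (- (1) + (2 * of_real s^2) - (of_real s^4)) * r3 q * sg [GaS,Ga] 1
    + sg [Ga] ((of_real s^1) - (of_real s^3)) * r6 q * sg [GaS] 1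
    + sg [Ga,GaS] (- (1) + (2 * of_real s^2) - (of_real s^4)) * r3 q * sg [] 1
    + sg [] (- (inverse (of_real q)^1 * of_real s^2)) * r1 q * sg [AlS,GaS] 1
    + sg [Al] ((inverse (of_real q)^1 * of_real s^2)) * r7 q * sg [GaS] 1
    + sg [] ((of_real s^2)) * r5 q * sg [Ga,GaS] 1
    + sg [] (- (inverse (of_real q)^1 * of_real s^1) + (inverse (of_real q)^1 * of_real s^3)) * r1 q * sg [GaS,Ga] 1
    + sg [Al,Ga] (- (inverse (of_real q)^1 * of_real s^1) + (inverse (of_real q)^1 * of_real s^3)) * r3 q * sg [] 1"
    apply (simp only: Kr_def Lr_def Lsr_def r1_def r2_def r3_def r4_def r5_def r6_def r7_def to_pm)
    apply (rule pm_eqI)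
    apply (simp add: collect_def)
    using q0 by (simp add: field_simps power2_eq_square power3_eq_cube power4_eq_xxxx)
  also have "\<dots> \<in> Jr q" by (intro Jr.add Jr_genI rels_in)
  finally show ?thesis by (simp add: cg_def)
qed

lemma B3:
  assumes "q > 0"
  shows "cg q (Lr s q * Lsr s q) (sg [] (of_real s ^ 2) + sg [] ((1 - of_real s ^ 2) * of_real q ^ 2) * Kr s q - sg [] (of_real q ^ 4) * (Kr s q * Kr s q))"
proof -
  have q0: "complex_of_real q \<noteq> 0" using assms by simp
  have "Lr s q * Lsr s q - (sg [] (of_real s ^ 2) + sg [] ((1 - of_real s ^ 2) * of_real q ^ 2) * Kr s q - sg [] (of_real q ^ 4) * (Kr s q * Kr s q)) =
    sg [GaS] (- (of_real q^1 * of_real s^2)) * r6 q * sg [AlS] 1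
    + sg [] (- (of_real q^2 * of_real s^2)) * r6 q * sg [GaS,AlS] 1
    + sg [AlS,GaS] (- (of_real q^3 * of_real s^2)) * r6 q * sg [] 1
    + sg [GaS] ((of_real q^1 * of_real s^1) - (of_real q^1 * of_real s^3)) * r3 q * sg [AlS] 1
    + sg [GaS] (- (of_real q^2 * of_real s^2)) * r3 q * sg [Ga] 1
    + sg [] ((of_real q^1 * of_real s^1) - (of_real q^1 * of_real s^3)) * r3 q * sg [GaS,AlS] 1
    + sg [] (- (of_real q^2 * of_real s^2) - (of_real q^4) + (2 * of_real q^4 * of_real s^2) - (of_real q^4 * of_real s^4)) * r3 q * sg [GaS,Ga] 1
    + sg [Al] ((of_real s^1) - (of_real s^3)) * r6 q * sg [AlS] 1
    + sg [] ((of_real q^1 * of_real s^1) - (of_real q^1 * of_real s^3)) * r5 q * sg [GaS,AlS] 1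
    + sg [] ((of_real q^1 * of_real s^1) - (of_real q^1 * of_real s^3)) * r6 q * sg [] 1
    + sg [Al] (- (1) + (2 * of_real s^2) - (of_real s^4)) * r3 q * sg [AlS] 1
    + sg [Al] ((of_real q^1 * of_real s^1) - (of_real q^1 * of_real s^3)) * r3 q * sg [Ga] 1
    + sg [Al] ((of_real s^2)) * r5 q * sg [AlS] 1
    + sg [] ((of_real s^2)) * r5 q * sg [] 1
    + sg [Al,Al] ((of_real s^1) - (of_real s^3)) * r7 q * sg [] 1
    + sg [Al] ((of_real q^1 * of_real s^1) - (of_real q^1 * of_real s^3)) * r5 q * sg [Ga] 1
    + sg [Al,Ga] ((1) - (2 * of_real s^2) + (of_real s^4) - (of_real q^2 * of_real s^2)) * r6 q * sg [] 1
    + sg [Al] ((of_real q^1) - (2 * of_real q^1 * of_real s^2) + (of_real q^1 * of_real s^4)) * r7 q * sg [GaS] 1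
    + sg [] ((of_real q^2) - (2 * of_real q^2 * of_real s^2) + (of_real q^2 * of_real s^4)) * r5 q * sg [Ga,GaS] 1
    + sg [Al,Ga] ((of_real q^1 * of_real s^1) - (of_real q^1 * of_real s^3)) * r3 q * sg [] 1
    + sg [Ga,GaS] (- (of_real q^1 * of_real s^1) + (of_real q^1 * of_real s^3) - (of_real q^3 * of_real s^1) + (of_real q^3 * of_real s^3)) * r6 q * sg [] 1
    + sg [Ga] (- (of_real q^2 * of_real s^1) + (of_real q^2 * of_real s^3)) * r6 q * sg [GaS] 1
    + sg [] (- (of_real q^3 * of_real s^1) + (of_real q^3 * of_real s^3)) * r7 q * sg [GaS,GaS] 1
    + sg [Ga,GaS] (- (of_real q^2 * of_real s^2) - (of_real q^4) + (2 * of_real q^4 * of_real s^2) - (of_real q^4 * of_real s^4)) * r3 q * sg [] 1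
    + sg [AlS,GaS] (- (of_real q^4 * of_real s^1) + (of_real q^4 * of_real s^3)) * r3 q * sg [] 1
    + sg [AlS] (- (of_real q^4 * of_real s^1) + (of_real q^4 * of_real s^3)) * r3 q * sg [GaS] 1
    + sg [AlS] (- (of_real q^4 * of_real s^2)) * r3 q * sg [Al] 1
    + sg [AlS,Ga] (- (of_real q^3 * of_real s^2)) * r2 q * sg [] 1
    + sg [AlS] (- (of_real q^2 * of_real s^2)) * r1 q * sg [GaS] 1
    + sg [] ((of_real q^2 * of_real s^2)) * r4 q * sg [Ga,GaS] 1
    + sg [] ((of_real q^2 * of_real s^2)) * r3 q * sg [Ga,GaS] 1
    + sg [] ((of_real q^2) - (2 * of_real q^2 * of_real s^2) + (of_real q^2 * of_real s^4)) * r3 q * sg [] 1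
    + sg [] (- (of_real q^4 * of_real s^1) + (of_real q^4 * of_real s^3)) * r3 q * sg [AlS,GaS] 1
    + sg [] (- (of_real q^4 * of_real s^1) + (of_real q^4 * of_real s^3)) * r3 q * sg [Ga,Al] 1
    + sg [Ga] (- (of_real q^4 * of_real s^1) + (of_real q^4 * of_real s^3)) * r3 q * sg [Al] 1
    + sg [] ((of_real q^1 * of_real s^1) - (of_real q^1 * of_real s^3)) * r1 q * sg [] 1
    + sg [] (- (of_real q^3 * of_real s^2)) * r1 q * sg [AlS,GaS] 1
    + sg [] (- (of_real q^3 * of_real s^1) + (of_real q^3 * of_real s^3)) * r1 q * sg [GaS,Ga] 1
    + sg [] (- (of_real q^3 * of_real s^2)) * r1 q * sg [Ga,Al] 1
    + sg [Al,Ga] (- (of_real q^2 * of_real s^2)) * r1 q * sg [] 1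
    + sg [Al] (- (of_real q^1 * of_real s^2)) * r1 q * sg [Ga] 1
    + sg [Ga,Ga] (- (of_real q^3 * of_real s^1) + (of_real q^3 * of_real s^3)) * r2 q * sg [] 1
    + sg [Ga] (- (of_real q^2 * of_real s^1) + (of_real q^2 * of_real s^3)) * r1 q * sg [GaS] 1
    + sg [] (- (of_real q^1 * of_real s^1) + (of_real q^1 * of_real s^3)) * r1 q * sg [Ga,GaS] 1"
    apply (simp only: Kr_def Lr_def Lsr_def r1_def r2_def r3_def r4_def r5_def r6_def r7_def to_pm)
    apply (rule pm_eqI)
    apply (simp add: collect_def)
    using q0 by (simp add: field_simps power2_eq_square power3_eq_cube power4_eq_xxxx)
  also have "\<dots> \<in> Jr q" by (intro Jr.add Jr_genI rels_in)
  finally show ?thesis by (simp add: cg_def)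
qed




abbreviation sc :: "complex \<Rightarrow> hp" where "sc c \<equiv> sg [] c"

lemma sc_mult: "sc a * sc b = sc (a * b)" by (simp add: sg_mult)
lemma sc_multX: "sc a * (sc b * X) = sc (a * b) * X" by (simp add: sg_mult mult.assoc[symmetric])
lemma sc_1: "sc 1 = 1" by (rule sg_one)
lemma sc_0: "sc 0 = 0" by simp
lemma sc_add: "sc (a + b) = sc a + sc b" by (simp add: single_add)

lemma sc_neg1: "sc (- 1) * X = - X"
  by (simp add: single_uminus sg_one)
lemma sc_swap: "X * (sc a * Y) = sc a * (X * Y)"
  by (metis mult.assoc sc_comm)

definition pE :: "hp \<Rightarrow> complex poly \<Rightarrow> hp" where
  "pE X p = (\<Sum>i\<le>degree p. sc (coeff p i) * X ^ i)"

lemma pE_upto: "degree p \<le> n \<Longrightarrow> pE X p = (\<Sum>i\<le>n. sc (coeff p i) * X ^ i)"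
  unfolding pE_def
  by (rule sum.mono_neutral_left) (auto simp: coeff_eq_0)

lemma pE_0[simp]: "pE X 0 = 0" by (simp add: pE_def)

lemma pE_add: "pE X (p + r) = pE X p + pE X r"
proof -
  let ?n = "max (degree p) (degree r)"
  have "pE X (p + r) = (\<Sum>i\<le>?n. sc (coeff (p + r) i) * X ^ i)"
    by (rule pE_upto) (simp add: degree_add_le)
  also have "\<dots> = (\<Sum>i\<le>?n. sc (coeff p i) * X ^ i) + (\<Sum>i\<le>?n. sc (coeff r i) * X ^ i)"
    by (simp add: sc_add distrib_right sum.distrib)
  also have "\<dots> = pE X p + pE X r" using pE_upto[of p ?n X] pE_upto[of r ?n X] by simp
  finally show ?thesis .
qed

lemma pE_pCons: "pE X (pCons a p) = sc a + X * pE X p"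
proof -
  have "pE X (pCons a p) = (\<Sum>i\<le>Suc (degree p). sc (coeff (pCons a p) i) * X ^ i)"
    by (rule pE_upto) (simp add: degree_pCons_le)
  also have "\<dots> = sc a + (\<Sum>i\<le>degree p. sc (coeff p i) * X ^ Suc i)"
    by (simp add: sum.atMost_Suc_shift del: sum.atMost_Suc)
  also have "\<dots> = sc a + X * pE X p"
    by (simp add: pE_def sum_distrib_left sc_swap mult.assoc)
  finally show ?thesis .
qed

lemma pE_const: "pE X [:c:] = sc c" by (simp add: pE_pCons)
lemma pE_1: "pE X 1 = 1" by (simp add: one_pCons pE_pCons sc_1)
lemma pE_X: "pE X [:0, 1:] = X" by (simp add: pE_pCons sc_1)

lemma pE_smult: "pE X (smult a p) = sc a * pE X p"
  by (induction p) (simp_all add: pE_pCons distrib_left sc_mult sc_swap)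

lemma pE_mult: "pE X (p * r) = pE X p * pE X r"
proof (induction p)
  case 0 then show ?case by simp
next
  case (pCons a p)
  have "pE X (pCons a p * r) = sc a * pE X r + X * pE X (p * r)"
    by (simp only: mult_pCons_left pE_add pE_smult pE_pCons) simp
  also have "\<dots> = pE X (pCons a p) * pE X r"
    using pCons by (simp add: pE_pCons distrib_right mult.assoc)
  finally show ?case .
qed

lemma pE_uminus: "pE X (- p) = - pE X p"
proof -
  have "pE X (- p) = pE X (smult (-1) p)" by simp
  also have "\<dots> = - pE X p" by (simp only: pE_smult sc_neg1)
  finally show ?thesis .
qed
lemma pE_diff: "pE X (p - r) = pE X p - pE X r"
  using pE_add[of X p "- r"] by (simp add: pE_uminus)

lemma pE_comm: "pE X p * pE X r = pE X r * pE X p"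
  by (metis pE_mult mult.commute)

definition scl :: "complex \<Rightarrow> complex poly \<Rightarrow> complex poly" where
  "scl a p = pcompose p [:0, a:]"

lemma coeff_scl: "coeff (scl a p) i = a ^ i * coeff p i"
  by (simp add: scl_def coeff_pcompose_linear)
lemma degree_scl: "degree (scl a p) \<le> degree p"
  by (rule degree_le) (simp add: coeff_scl coeff_eq_0)
lemma scl_scl: "scl a (scl b p) = scl (a * b) p"
  by (rule poly_eqI) (simp add: coeff_scl power_mult_distrib)
lemma scl_1[simp]: "scl 1 p = p" by (rule poly_eqI) (simp add: coeff_scl)
lemma scl_add: "scl a (p + r) = scl a p + scl a r" by (simp add: scl_def pcompose_add)
lemma scl_diff: "scl a (p - r) = scl a p - scl a r" by (simp add: scl_def pcompose_diff)
lemma scl_mult: "scl a (p * r) = scl a p * scl a r" by (simp add: scl_def pcompose_mult)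
lemma scl_one[simp]: "scl a 1 = 1" by (simp add: scl_def pcompose_1)
lemma poly_scl: "poly (scl a p) x = poly p (a * x)" by (simp add: scl_def poly_pcompose mult.commute)

lemma commute_pow:
  assumes "cg q (Y * X) (sc a * X * Y)"
  shows "cg q (Y * X ^ i) (sc (a ^ i) * X ^ i * Y)"
proof (induction i)
  case 0 then show ?case by (simp add: sc_1)
next
  case (Suc i)
  have "Y * X ^ Suc i = (Y * X ^ i) * X" by (simp only: power_Suc2 mult.assoc)
  also have "cg q \<dots> (sc (a ^ i) * X ^ i * Y * X)" using Suc by (rule cg_multR)
  also have "sc (a ^ i) * X ^ i * Y * X = sc (a ^ i) * X ^ i * (Y * X)" by (simp add: mult.assoc)
  also have "cg q \<dots> (sc (a ^ i) * X ^ i * (sc a * X * Y))" using assms by (rule cg_multL)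
  also have "sc (a ^ i) * X ^ i * (sc a * X * Y) = sc (a ^ Suc i) * X ^ Suc i * Y"
  proof -
    have "X ^ i * (sc a * X * Y) = sc a * (X ^ Suc i * Y)"
      by (simp only: mult.assoc sc_swap) (simp only: mult.assoc[symmetric] power_Suc2)
    then show ?thesis by (simp add: mult.assoc sc_multX mult.commute)
  qed
  finally show ?case .
qed

lemma commute_pE:
  assumes "cg q (Y * X) (sc a * X * Y)"
  shows "cg q (Y * pE X p) (pE X (scl a p) * Y)"
proof -
  have "Y * pE X p = (\<Sum>i\<le>degree p. sc (coeff p i) * (Y * X ^ i))"
    by (simp add: pE_def sum_distrib_left sc_swap)
  also have "cg q \<dots> (\<Sum>i\<le>degree p. sc (coeff p i) * (sc (a ^ i) * X ^ i * Y))"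
    by (rule cg_sum) (auto intro: cg_multL commute_pow assms)
  also have "(\<Sum>i\<le>degree p. sc (coeff p i) * (sc (a ^ i) * X ^ i * Y)) =
             (\<Sum>i\<le>degree p. sc (coeff (scl a p) i) * X ^ i) * Y"
    by (simp add: sum_distrib_right coeff_scl mult.assoc sc_multX mult.commute)
  also have "\<dots> = pE X (scl a p) * Y" by (simp add: pE_upto[OF degree_scl])
  finally show ?thesis .
qed




definition "phi s = [:complex_of_real s ^ 2, 1 - complex_of_real s ^ 2, -1:]"

fun PhiN :: "real \<Rightarrow> real \<Rightarrow> nat \<Rightarrow> complex poly" where
  "PhiN s q 0 = 1"
| "PhiN s q (Suc N) = scl ((complex_of_real q ^ 2) ^ Suc N) (phi s) * PhiN s q N"

lemma scl_3: "scl a [:x, y, z:] = [:x, a * y, a ^ 2 * z:]"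
  by (rule poly_eqI) (simp add: coeff_scl coeff_pCons power2_eq_square split: nat.split)

lemma pE_3: "pE X [:x, y, z:] = sc x + sc y * X - sc (- z) * (X * X)"
  by (simp add: pE_pCons distrib_left sc_swap single_uminus sc_comm mult.assoc)

context
  fixes s q :: real
  assumes q0: "0 < q"
begin

abbreviation "K \<equiv> Kr s q"
abbreviation "L \<equiv> Lr s q"
abbreviation "M \<equiv> Lsr s q"
abbreviation "pK \<equiv> pE K"
abbreviation "q2 \<equiv> complex_of_real q ^ 2"
abbreviation "iq2 \<equiv> inverse (complex_of_real q ^ 2)"

lemma q2_nz: "q2 \<noteq> 0" using q0 by simp

lemma LK: "cg q (L * K) (sc q2 * K * L)" using B1[OF q0] .

lemma MK: "cg q (M * K) (sc iq2 * K * M)"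
proof -
  have "cg q (sc iq2 * (K * M)) (sc iq2 * (sc q2 * M * K))"
    using B4[OF q0] by (rule cg_multL)
  also have "sc iq2 * (sc q2 * M * K) = M * K"
    using q2_nz by (simp add: mult.assoc[symmetric] sc_mult sc_1)
  finally have "cg q (M * K) (sc iq2 * (K * M))" by (rule cg_sym)
  then show ?thesis by (simp add: mult.assoc)
qed

lemma LM: "cg q (L * M) (pK (scl q2 (phi s)))"
proof -
  have "pK (scl q2 (phi s)) = sc (complex_of_real s ^ 2) + sc ((1 - complex_of_real s ^ 2) * complex_of_real q ^ 2) * K - sc (complex_of_real q ^ 4) * (K * K)"
    by (simp add: phi_def scl_3 pE_3 mult.commute power_mult_distrib[symmetric] power_mult[symmetric])
  then show ?thesis using B3[OF q0, of s] by simp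
qed

lemma MtL: "cg q (M * L) (pK (phi s))"
proof -
  have "pK (phi s) = sc (complex_of_real s ^ 2) + sc (1 - complex_of_real s ^ 2) * K - K * K"
    by (simp add: phi_def pE_3 sc_1)
  then show ?thesis using B2[OF q0, of s] by simp
qed

lemma LN: "cg q (L ^ N * pK p) (pK (scl (q2 ^ N) p) * L ^ N)"
proof (induction N arbitrary: p)
  case 0 then show ?case by simp
next
  case (Suc N)
  have "L ^ Suc N * pK p = L ^ N * (L * pK p)" by (simp only: power_Suc2 mult.assoc)
  also have "cg q \<dots> (L ^ N * (pK (scl q2 p) * L))" by (rule cg_multL) (rule commute_pE[OF LK])
  also have "L ^ N * (pK (scl q2 p) * L) = (L ^ N * pK (scl q2 p)) * L" by (simp add: mult.assoc)
  also have "cg q \<dots> (pK (scl (q2 ^ N) (scl q2 p)) * L ^ N * L)" by (rule cg_multR) (rule Suc.IH)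
  also have "pK (scl (q2 ^ N) (scl q2 p)) * L ^ N * L = pK (scl (q2 ^ Suc N) p) * L ^ Suc N"
    by (simp add: scl_scl power_Suc2 mult.assoc power_commutes mult.commute)
  finally show ?case .
qed

lemma MN: "cg q (M ^ N * pK p) (pK (scl (iq2 ^ N) p) * M ^ N)"
proof (induction N arbitrary: p)
  case 0 then show ?case by simp
next
  case (Suc N)
  have "M ^ Suc N * pK p = M ^ N * (M * pK p)" by (simp only: power_Suc2 mult.assoc)
  also have "cg q \<dots> (M ^ N * (pK (scl iq2 p) * M))" by (rule cg_multL) (rule commute_pE[OF MK])
  also have "M ^ N * (pK (scl iq2 p) * M) = (M ^ N * pK (scl iq2 p)) * M" by (simp add: mult.assoc)
  also have "cg q \<dots> (pK (scl (iq2 ^ N) (scl iq2 p)) * M ^ N * M)" by (rule cg_multR) (rule Suc.IH)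
  also have "pK (scl (iq2 ^ N) (scl iq2 p)) * M ^ N * M = pK (scl (iq2 ^ Suc N) p) * M ^ Suc N"
    by (simp add: scl_scl power_Suc2 mult.assoc power_commutes mult.commute)
  finally show ?case .
qed

lemma LMN: "cg q (L ^ N * M ^ N) (pK (PhiN s q N))"
proof (induction N)
  case 0 then show ?case by (simp add: pE_1)
next
  case (Suc N)
  have "L ^ Suc N * M ^ Suc N = L ^ N * (L * M) * M ^ N" by (simp only: power_Suc2[of L] power_Suc[of M] mult.assoc)
  also have "cg q \<dots> (L ^ N * pK (scl q2 (phi s)) * M ^ N)" by (intro cg_multR cg_multL LM)
  also have "cg q (L ^ N * pK (scl q2 (phi s)) * M ^ N) (pK (scl (q2 ^ N) (scl q2 (phi s))) * L ^ N * M ^ N)"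
    by (rule cg_multR) (rule LN)
  also have "pK (scl (q2 ^ N) (scl q2 (phi s))) * L ^ N * M ^ N = pK (scl (q2 ^ N) (scl q2 (phi s))) * (L ^ N * M ^ N)"
    by (simp add: mult.assoc)
  also have "cg q \<dots> (pK (scl (q2 ^ N) (scl q2 (phi s))) * pK (PhiN s q N))" by (rule cg_multL) (rule Suc.IH)
  also have "pK (scl (q2 ^ N) (scl q2 (phi s))) * pK (PhiN s q N) = pK (PhiN s q (Suc N))"
    by (simp add: pE_mult[symmetric] scl_scl mult.commute)
  finally show ?case .
qed

lemma MtLN: "cg q (M ^ N * L ^ N) (pK (scl (iq2 ^ N) (PhiN s q N)))"
proof (induction N)
  case 0 then show ?case by (simp add: pE_1)
next
  case (Suc N)
  have "M ^ Suc N * L ^ Suc N = M * (M ^ N * L ^ N) * L" by (simp only: power_Suc2[of L] power_Suc[of M] mult.assoc)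
  also have "cg q \<dots> (M * pK (scl (iq2 ^ N) (PhiN s q N)) * L)" by (intro cg_multR cg_multL Suc.IH)
  also have "cg q \<dots> (pK (scl iq2 (scl (iq2 ^ N) (PhiN s q N))) * M * L)"
    by (rule cg_multR) (rule commute_pE[OF MK])
  also have "pK (scl iq2 (scl (iq2 ^ N) (PhiN s q N))) * M * L = pK (scl iq2 (scl (iq2 ^ N) (PhiN s q N))) * (M * L)"
    by (simp add: mult.assoc)
  also have "cg q \<dots> (pK (scl iq2 (scl (iq2 ^ N) (PhiN s q N))) * pK (phi s))" by (rule cg_multL) (rule MtL)
  also have "pK (scl iq2 (scl (iq2 ^ N) (PhiN s q N))) * pK (phi s) = pK (scl (iq2 ^ Suc N) (PhiN s q (Suc N)))"
  proof -
    have h: "iq2 * q2 = 1" using q2_nz by simp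
    have "iq2 ^ Suc N * q2 ^ Suc N = 1" by (metis h power_mult_distrib power_one)
    then have "scl (iq2 ^ Suc N) (PhiN s q (Suc N)) = phi s * scl (iq2 ^ Suc N) (PhiN s q N)"
      by (simp add: scl_mult scl_scl del: power_Suc)
    then show ?thesis by (simp add: pE_mult[symmetric] scl_scl mult.commute)
  qed
  finally show ?case .
qed


lemma idem:
  assumes AW: "A * (1 - A) = W * PhiN s q N"
  defines "C \<equiv> scl (iq2 ^ N) W" and "D \<equiv> 1 - scl (iq2 ^ N) A"
  shows "cg q (pK A * pK A + L ^ N * (pK C * M ^ N)) (pK A)"
    and "cg q (pK A * L ^ N + L ^ N * pK D) (L ^ N)"
    and "cg q (pK C * M ^ N * pK A + pK D * (pK C * M ^ N)) (pK C * M ^ N)"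
    and "cg q (pK C * M ^ N * L ^ N + pK D * pK D) (pK D)"
proof -
  have h: "q2 * iq2 = 1" using q2_nz by simp
  have r1: "q2 ^ N * iq2 ^ N = 1" by (metis h power_mult_distrib power_one)
  have sC: "scl (q2 ^ N) C = W" by (simp add: C_def scl_scl r1)
  have sD: "scl (q2 ^ N) D = 1 - A" by (simp add: D_def scl_diff scl_scl r1)
  show "cg q (pK A * pK A + L ^ N * (pK C * M ^ N)) (pK A)"
  proof -
    have "L ^ N * (pK C * M ^ N) = (L ^ N * pK C) * M ^ N" by (simp add: mult.assoc)
    also have "cg q \<dots> (pK W * L ^ N * M ^ N)" using LN[of N C] sC by (simp add: cg_multR)
    also have "pK W * L ^ N * M ^ N = pK W * (L ^ N * M ^ N)" by (simp add: mult.assoc)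
    also have "cg q \<dots> (pK W * pK (PhiN s q N))" by (rule cg_multL) (rule LMN)
    finally have "cg q (pK A * pK A + L ^ N * (pK C * M ^ N)) (pK A * pK A + pK W * pK (PhiN s q N))"
      by (intro cg_add cg_refl)
    also have "pK A * pK A + pK W * pK (PhiN s q N) = pK (A * A + W * PhiN s q N)"
      by (simp add: pE_mult pE_add)
    also have "A * A + W * PhiN s q N = A" using AW by (simp add: algebra_simps)
    finally show ?thesis .
  qed
  show "cg q (pK A * L ^ N + L ^ N * pK D) (L ^ N)"
  proof -
    have "cg q (L ^ N * pK D) (pK (1 - A) * L ^ N)" using LN[of N D] sD by simp
    then have "cg q (pK A * L ^ N + L ^ N * pK D) (pK A * L ^ N + pK (1 - A) * L ^ N)"
      by (intro cg_add cg_refl)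
    also have "pK A * L ^ N + pK (1 - A) * L ^ N = L ^ N"
      by (simp add: pE_diff pE_1 algebra_simps)
    finally show ?thesis .
  qed
  show "cg q (pK C * M ^ N * pK A + pK D * (pK C * M ^ N)) (pK C * M ^ N)"
  proof -
    have "pK C * M ^ N * pK A = pK C * (M ^ N * pK A)" by (simp add: mult.assoc)
    also have "cg q \<dots> (pK C * (pK (scl (iq2 ^ N) A) * M ^ N))" by (rule cg_multL) (rule MN)
    finally have "cg q (pK C * M ^ N * pK A + pK D * (pK C * M ^ N))
       (pK C * (pK (scl (iq2 ^ N) A) * M ^ N) + pK D * (pK C * M ^ N))"
      by (intro cg_add cg_refl)
    also have "pK C * (pK (scl (iq2 ^ N) A) * M ^ N) + pK D * (pK C * M ^ N)
       = pK (C * scl (iq2 ^ N) A + D * C) * M ^ N"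
      by (simp add: pE_mult pE_add distrib_right mult.assoc)
    also have "C * scl (iq2 ^ N) A + D * C = C" by (simp add: D_def algebra_simps)
    finally show ?thesis .
  qed
  show "cg q (pK C * M ^ N * L ^ N + pK D * pK D) (pK D)"
  proof -
    have "pK C * M ^ N * L ^ N = pK C * (M ^ N * L ^ N)" by (simp add: mult.assoc)
    also have "cg q \<dots> (pK C * pK (scl (iq2 ^ N) (PhiN s q N)))" by (rule cg_multL) (rule MtLN)
    finally have "cg q (pK C * M ^ N * L ^ N + pK D * pK D) (pK C * pK (scl (iq2 ^ N) (PhiN s q N)) + pK D * pK D)"
      by (intro cg_add cg_refl)
    also have "pK C * pK (scl (iq2 ^ N) (PhiN s q N)) + pK D * pK D = pK (C * scl (iq2 ^ N) (PhiN s q N) + D * D)"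
      by (simp add: pE_mult pE_add)
    also have "C * scl (iq2 ^ N) (PhiN s q N) + D * D = D"
    proof -
      have "scl (iq2 ^ N) (A * (1 - A)) = scl (iq2 ^ N) (W * PhiN s q N)" using AW by simp
      then have "(1 - D) * D = C * scl (iq2 ^ N) (PhiN s q N)"
        by (simp add: scl_mult scl_diff C_def D_def)
      then show ?thesis by (simp add: algebra_simps)
    qed
    finally show ?thesis .
  qed
qed

end



definition bez :: "complex poly \<Rightarrow> complex poly \<Rightarrow> bool" where
  "bez p r \<longleftrightarrow> (\<exists>x y. p * x + r * y = 1)"

lemma bez_sym: "bez p r \<Longrightarrow> bez r p"
proof -
  assume "bez p r"
  then obtain x y where "p * x + r * y = 1" unfolding bez_def by blast
  then have "r * y + p * x = 1" by (simp add: add.commute)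
  then show "bez r p" unfolding bez_def by blast
qed
lemma bez_one_left: "bez 1 r" unfolding bez_def by (rule exI[of _ 1], rule exI[of _ 0]) simp
lemma bez_one_right: "bez p 1" using bez_sym bez_one_left by blast
lemma bez_mult_left: "bez p1 r \<Longrightarrow> bez p2 r \<Longrightarrow> bez (p1 * p2) r"
proof -
  assume "bez p1 r" "bez p2 r"
  then obtain x1 y1 x2 y2 where h1: "p1 * x1 + r * y1 = 1" and h2: "p2 * x2 + r * y2 = 1"
    unfolding bez_def by blast
  have "p1 * x1 = 1 - r * y1" "p2 * x2 = 1 - r * y2" using h1 h2 by (simp_all add: algebra_simps)
  have "(p1 * p2) * (x1 * x2) = (p1 * x1) * (p2 * x2)" by (simp add: ac_simps)
  then have "(p1 * p2) * (x1 * x2) = (1 - r * y1) * (1 - r * y2)" using \<open>p1 * x1 = 1 - r * y1\<close> \<open>p2 * x2 = 1 - r * y2\<close> by simp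
  then have "(p1 * p2) * (x1 * x2) + r * (y1 + y2 - r * y1 * y2) = 1" by (simp add: algebra_simps)
  then show ?thesis unfolding bez_def by blast
qed
lemma bez_mult_right: "bez p u1 \<Longrightarrow> bez p u2 \<Longrightarrow> bez p (u1 * u2)"
  using bez_mult_left bez_sym by blast

lemma bez_lin:
  assumes "a + b * c \<noteq> 0"
  shows "bez [:c, a:] [:1, - b:]"
proof -
  let ?d = "a + b * c"
  have "c * (b / ?d) + a / ?d = (b * c) / ?d + a / ?d" by simp
  also have "\<dots> = (b * c + a) / ?d" by (simp only: add_divide_distrib)
  also have "\<dots> = 1" using assms by (simp add: add.commute)
  finally have e1: "c * (b / ?d) + a / ?d = 1" .
  have "[:c, a:] * [:b / ?d:] + [:1, - b:] * [:a / ?d:] = [:c * (b / ?d) + a / ?d, a * (b / ?d) - b * (a / ?d):]"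
    by simp
  also have "\<dots> = 1" using e1 by (simp add: one_pCons)
  finally have "[:c, a:] * [:b / ?d:] + [:1, - b:] * [:a / ?d:] = 1" .
  then show ?thesis unfolding bez_def by blast
qed

context
  fixes s q :: real
  assumes q0: "0 < q" and q1: "q < 1"
begin

abbreviation "S \<equiv> complex_of_real s"
abbreviation "Q2 \<equiv> complex_of_real q ^ 2"
abbreviation "IQ2 \<equiv> inverse (complex_of_real q ^ 2)"

fun Vp :: "nat \<Rightarrow> complex poly" where
  "Vp 0 = 1" | "Vp (Suc N) = [:S ^ 2, Q2 ^ Suc N:] * Vp N"
fun Up :: "nat \<Rightarrow> complex poly" where
  "Up 0 = 1" | "Up (Suc N) = [:1, - (Q2 ^ Suc N):] * Up N"

lemma phi_factor: "scl a (phi s) = [:S ^ 2, a:] * [:1, - a:]"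
  unfolding phi_def scl_3 by (simp add: algebra_simps power2_eq_square)

lemma PhiN_VU: "PhiN s q N = Vp N * Up N"
proof (induction N)
  case 0 then show ?case by simp
next
  case (Suc N)
  show ?case by (simp only: PhiN.simps Vp.simps Up.simps phi_factor Suc) (simp only: ac_simps)
qed

lemma q2pow: "Q2 ^ j = complex_of_real ((q ^ 2) ^ j)" by simp

lemma bez_VU: "bez (Vp N) (Up Mm)"
proof (induction N)
  case 0 then show ?case by (simp add: bez_one_left)
next
  case (Suc N)
  have "bez [:S ^ 2, Q2 ^ Suc N:] (Up Mm)"
  proof (induction Mm)
    case 0 then show ?case by (simp add: bez_one_right)
  next
    case (Suc Mm)
    have "Q2 ^ Suc N + Q2 ^ Suc Mm * S ^ 2 \<noteq> 0"
    proof -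
      have "(q ^ 2) ^ Suc N + (q ^ 2) ^ Suc Mm * s ^ 2 > 0" using q0
        by (intro add_pos_nonneg) (simp_all del: power_Suc)
      then have "complex_of_real ((q ^ 2) ^ Suc N + (q ^ 2) ^ Suc Mm * s ^ 2) \<noteq> 0"
        by (metis of_real_eq_0_iff less_irrefl)
      moreover have "complex_of_real ((q ^ 2) ^ Suc N + (q ^ 2) ^ Suc Mm * s ^ 2) = Q2 ^ Suc N + Q2 ^ Suc Mm * S ^ 2"
        by (simp only: of_real_add of_real_mult of_real_power)
      ultimately show ?thesis by simp
    qed
    then have "bez [:S ^ 2, Q2 ^ Suc N:] [:1, - (Q2 ^ Suc Mm):]" by (rule bez_lin)
    then show ?case using Suc by (simp only: Up.simps) (rule bez_mult_right)
  qed
  then show ?case using Suc by (simp only: Vp.simps) (rule bez_mult_left)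
qed

lemma Up_root: "1 \<le> j \<Longrightarrow> j \<le> N \<Longrightarrow> poly (Up N) (IQ2 ^ j) = 0"
proof (induction N)
  case 0 then show ?case by simp
next
  case (Suc N)
  show ?case
  proof (cases "j = Suc N")
    case True
    have h: "Q2 * IQ2 = 1" using q0 by simp
    have "Q2 ^ j * IQ2 ^ j = 1" by (metis h power_mult_distrib power_one)
    then have "poly [:1, - (Q2 ^ Suc N):] (IQ2 ^ j) = 0" using True by (simp add: mult.commute del: power_Suc)
    then show ?thesis using True by (simp only: Up.simps poly_mult) simp
  next
    case False then show ?thesis using Suc by simp
  qed
qed

lemma Vp_root: "1 \<le> j \<Longrightarrow> j \<le> N \<Longrightarrow> poly (Vp N) (- (S ^ 2) * IQ2 ^ j) = 0"
proof (induction N)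
  case 0 then show ?case by simp
next
  case (Suc N)
  show ?case
  proof (cases "j = Suc N")
    case True
    have h: "Q2 * IQ2 = 1" using q0 by simp
    have "Q2 ^ j * IQ2 ^ j = 1" by (metis h power_mult_distrib power_one)
    then have "S ^ 2 + Q2 ^ j * (- (S ^ 2) * IQ2 ^ j) = 0" by (simp add: algebra_simps del: power_Suc)
    then have "poly [:S ^ 2, Q2 ^ Suc N:] (- (S ^ 2) * IQ2 ^ j) = 0" using True by (simp add: algebra_simps del: power_Suc)
    then show ?thesis using True by (simp only: Vp.simps poly_mult) simp
  next
    case False then show ?thesis using Suc by simp
  qed
qed

lemma exists_A:
  "\<exists>A W. A * (1 - A) = W * PhiN s q N \<and>
     (\<forall>j\<in>{1..N}. poly A (IQ2 ^ j) = (if pos then 1 else 0) \<and> poly A (- (S ^ 2) * IQ2 ^ j) = (if pos then 0 else 1))"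
proof -
  obtain x y where xy: "Vp N * x + Up N * y = 1" using bez_VU[of N N] unfolding bez_def by blast
  have e: "poly (Vp N) z * poly x z + poly (Up N) z * poly y z = 1" for z
    using arg_cong[OF xy, of "\<lambda>p. poly p z"] by simp
  have u: "poly (Up N) (IQ2 ^ j) = 0" and v: "poly (Vp N) (- (S ^ 2) * IQ2 ^ j) = 0" if "j \<in> {1..N}" for j
    using that Up_root Vp_root by auto
  show ?thesis
  proof (cases pos)
    case True
    have f1: "(Vp N * x) * (1 - Vp N * x) = (x * y) * PhiN s q N"
    proof -
      have "1 - Vp N * x = Up N * y" using xy by (simp add: algebra_simps)
      then show ?thesis by (simp add: PhiN_VU ac_simps)
    qed
    have f2: "\<forall>j\<in>{1..N}. poly (Vp N * x) (IQ2 ^ j) = 1 \<and> poly (Vp N * x) (- (S ^ 2) * IQ2 ^ j) = 0"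
    proof
      fix j assume j: "j \<in> {1..N}"
      show "poly (Vp N * x) (IQ2 ^ j) = 1 \<and> poly (Vp N * x) (- (S ^ 2) * IQ2 ^ j) = 0"
        using e[of "IQ2 ^ j"] u[OF j] v[OF j] by simp
    qed
    show ?thesis using f1 f2 True by (intro exI[of _ "Vp N * x"] exI[of _ "x * y"]) simp
  next
    case False
    have f1: "(Up N * y) * (1 - Up N * y) = (x * y) * PhiN s q N"
    proof -
      have "1 - Up N * y = Vp N * x" using xy by (simp add: algebra_simps)
      then show ?thesis by (simp add: PhiN_VU ac_simps)
    qed
    have f2: "\<forall>j\<in>{1..N}. poly (Up N * y) (IQ2 ^ j) = 0 \<and> poly (Up N * y) (- (S ^ 2) * IQ2 ^ j) = 1"
    proof
      fix j assume j: "j \<in> {1..N}"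
      have e2: "poly (Up N) z * poly y z = 1 - poly (Vp N) z * poly x z" for z using e[of z] by (simp add: algebra_simps)
      show "poly (Up N * y) (IQ2 ^ j) = 0 \<and> poly (Up N * y) (- (S ^ 2) * IQ2 ^ j) = 1"
        using e2[of "- (S ^ 2) * IQ2 ^ j"] u[OF j] v[OF j] by simp
    qed
    show ?thesis using f1 f2 False by (intro exI[of _ "Up N * y"] exI[of _ "x * y"]) simp
  qed
qed

definition G :: "nat \<Rightarrow> complex" where "G i = ((- (S ^ 2)) ^ i - 1) / (1 - Q2 ^ i)"
definition Tr :: "complex poly \<Rightarrow> complex" where "Tr p = (\<Sum>i\<le>degree p. coeff p i * G i)"

lemma Tr_upto: "degree p \<le> n \<Longrightarrow> Tr p = (\<Sum>i\<le>n. coeff p i * G i)"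
  unfolding Tr_def by (rule sum.mono_neutral_left) (auto simp: coeff_eq_0)

lemma Gzero: "G 0 = 0" by (simp add: G_def)

lemma geom_aux: "t \<noteq> 0 \<Longrightarrow> (1 - inverse t) * (\<Sum>j\<in>{1..N}. t ^ j) = t ^ N - (1::complex)"
proof (induction N)
  case 0 then show ?case by simp
next
  case (Suc N)
  have "(\<Sum>j\<in>{1..Suc N}. t ^ j) = (\<Sum>j\<in>{1..N}. t ^ j) + t ^ Suc N" by simp
  then have "(1 - inverse t) * (\<Sum>j\<in>{1..Suc N}. t ^ j) = (1 - inverse t) * (\<Sum>j\<in>{1..N}. t ^ j) + (1 - inverse t) * t ^ Suc N"
    by (simp only: distrib_left)
  also have "(1 - inverse t) * t ^ Suc N = t ^ Suc N - t ^ N" using Suc.prems by (simp add: algebra_simps)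
  finally show ?case using Suc by simp
qed

lemma alg_aux: "d \<noteq> 0 \<Longrightarrow> - (d * T) * ((X - 1) / d) = (1 - X) * (T::complex)"
  by (simp add: field_simps)

lemma G_id: "(1 - (IQ2 ^ N) ^ i) * G i = (\<Sum>j\<in>{1..N}. (IQ2 ^ j) ^ i - (- (S ^ 2) * IQ2 ^ j) ^ i)"
proof (cases "i = 0")
  case True then show ?thesis by (simp add: Gzero)
next
  case False
  let ?t = "IQ2 ^ i"
  have t0: "?t \<noteq> 0" using q0 by simp
  have q2i: "Q2 ^ i = inverse ?t" by (simp add: power_inverse)
  have lt1: "q ^ 2 < 1" using q0 q1 by (simp add: power_less_one_iff)
  have lt: "(q ^ 2) ^ i < 1" using lt1 False by (simp add: power_less_one_iff)
  have ne: "1 - Q2 ^ i \<noteq> 0"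
  proof
    assume "1 - Q2 ^ i = 0"
    then have "complex_of_real ((q ^ 2) ^ i) = 1" by simp
    then have "(q ^ 2) ^ i = 1" using of_real_eq_1_iff by blast
    then show False using lt by simp
  qed
  have "(\<Sum>j\<in>{1..N}. (IQ2 ^ j) ^ i - (- (S ^ 2) * IQ2 ^ j) ^ i) = (1 - (- (S ^ 2)) ^ i) * (\<Sum>j\<in>{1..N}. ?t ^ j)"
  proof -
    have pt: "(IQ2 ^ j) ^ i - (- (S ^ 2) * IQ2 ^ j) ^ i = (1 - (- (S ^ 2)) ^ i) * ?t ^ j" for j
    proof -
      have a: "(IQ2 ^ j) ^ i = ?t ^ j" by (metis power_mult mult.commute)
      have b: "(- (S ^ 2) * IQ2 ^ j) ^ i = (- (S ^ 2)) ^ i * ?t ^ j" by (simp only: power_mult_distrib a)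
      show ?thesis by (simp only: a b left_diff_distrib mult_1)
    qed
    show ?thesis by (simp only: pt sum_distrib_left)
  qed
  moreover have "(1 - (IQ2 ^ N) ^ i) * G i = (1 - (- (S ^ 2)) ^ i) * (\<Sum>j\<in>{1..N}. ?t ^ j)"
  proof -
    have g: "(1 - Q2 ^ i) * (\<Sum>j\<in>{1..N}. ?t ^ j) = ?t ^ N - 1" using geom_aux[OF t0, of N] q2i by simp
    have "(IQ2 ^ N) ^ i = ?t ^ N" by (simp add: power_mult[symmetric] mult.commute)
    then have e: "1 - (IQ2 ^ N) ^ i = - ((1 - Q2 ^ i) * (\<Sum>j\<in>{1..N}. ?t ^ j))" using g by simp
    show ?thesis unfolding G_def e by (rule alg_aux[OF ne])
  qed
  ultimately show ?thesis by simp
qed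

lemma trace_sum:
  "Tr A + Tr (1 - scl (IQ2 ^ N) A) = (\<Sum>j\<in>{1..N}. poly A (IQ2 ^ j) - poly A (- (S ^ 2) * IQ2 ^ j))"
proof -
  let ?n = "degree A"
  let ?D = "1 - scl (IQ2 ^ N) A"
  have dD: "degree ?D \<le> ?n"
    using degree_diff_le_max[of 1 "scl (IQ2 ^ N) A"] degree_scl[of "IQ2 ^ N" A] by simp
  have "Tr A + Tr ?D = (\<Sum>i\<le>?n. (coeff A i + coeff ?D i) * G i)"
    using Tr_upto[OF dD] by (simp add: Tr_def distrib_right sum.distrib)
  also have "\<dots> = (\<Sum>i\<le>?n. coeff A i * ((1 - (IQ2 ^ N) ^ i) * G i))"
  proof (rule sum.cong[OF refl])
    fix i assume "i \<in> {..?n}"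
    show "(coeff A i + coeff ?D i) * G i = coeff A i * ((1 - (IQ2 ^ N) ^ i) * G i)"
    proof (cases "i = 0")
      case True then show ?thesis by (simp add: Gzero)
    next
      case False
      then have cD: "coeff ?D i = - ((IQ2 ^ N) ^ i * coeff A i)" by (simp only: coeff_diff coeff_scl) simp
      show ?thesis unfolding cD by (simp add: algebra_simps)
    qed
  qed
  also have "\<dots> = (\<Sum>i\<le>?n. \<Sum>j\<in>{1..N}. coeff A i * (IQ2 ^ j) ^ i - coeff A i * (- (S ^ 2) * IQ2 ^ j) ^ i)"
    by (simp add: G_id sum_distrib_left right_diff_distrib)
  also have "\<dots> = (\<Sum>j\<in>{1..N}. poly A (IQ2 ^ j) - poly A (- (S ^ 2) * IQ2 ^ j))"
    by (subst sum.swap) (simp add: poly_altdef sum_subtractf)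
  finally show ?thesis .
qed

end



lemma keys_eq: "Poly_Mapping.keys X = {w. Poly_Mapping.lookup X w \<noteq> 0}"
  by (auto simp: in_keys_iff)

lemma lk_one: "lk 1 = nc_const 1"
  by (rule ext) (simp add: lookup_one when_def zero_list_def nc_const_def eq_commute)

lemma lk_sc_mult: "lk (sc c * X) w = c * lk X w"
proof -
  have "(\<Sum>i\<le>length w. (if i = 0 \<or> w = [] then c else 0) * lk X (drop i w)) = c * lk X w"
    by (cases w) (simp_all add: sum.atMost_Suc_shift del: sum.atMost_Suc)
  then show ?thesis by (simp add: lookup_times_nc nc_mult_def lk_sg)
qed

lemma lk_sum: "lk (sum f SS) w = (\<Sum>x\<in>SS. lk (f x) w)" by (simp add: lookup_sum)

fun gimg :: "real \<Rightarrow> real \<Rightarrow> bgen \<Rightarrow> hp" where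
  "gimg s q Kg = Kr s q" | "gimg s q KgS = Kr s q" | "gimg s q Lg = Lr s q" | "gimg s q LgS = Lsr s q"

definition BWr :: "real \<Rightarrow> real \<Rightarrow> bgen list \<Rightarrow> hp" where
  "BWr s q w = foldr (\<lambda>x acc. gimg s q x * acc) w 1"

lemma BWr_Nil[simp]: "BWr s q [] = 1" by (simp add: BWr_def)
lemma BWr_Cons[simp]: "BWr s q (x # w) = gimg s q x * BWr s q w" by (simp add: BWr_def)
lemma BWr_append: "BWr s q (u @ v) = BWr s q u * BWr s q v"
  by (induction u) (simp_all add: mult.assoc)
lemma BWr_rep: "BWr s q (replicate i x) = gimg s q x ^ i"
  by (induction i) simp_all

lemma gimg_ok: "bgen_img s q x = lk (gimg s q x)"
proof (cases x)
  case Kg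
  show ?thesis using Kg
    by (auto simp: fun_eq_iff Kel_def Kr_def nc_add_def nc_smult_def nc_mono_def lk_simps)
next
  case KgS
  show ?thesis using KgS
    by (auto simp: fun_eq_iff Kel_def Kr_def nc_add_def nc_smult_def nc_mono_def lk_simps nc_star_def rev_map_hstar_eq hstar_eq)
next
  case Lg
  show ?thesis using Lg
    by (auto simp: fun_eq_iff Lel_def Lr_def nc_add_def nc_sub_def nc_smult_def nc_mono_def lk_simps)
next
  case LgS
  show ?thesis using LgS
    by (auto simp: fun_eq_iff Lel_def Lsr_def nc_add_def nc_sub_def nc_smult_def nc_mono_def lk_simps nc_star_def rev_map_hstar_eq hstar_eq)
qed

lemma bword_ok: "bword_img s q w = lk (BWr s q w)"
proof (induction w)
  case Nil then show ?case by (simp add: bword_img_def lk_one)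
next
  case (Cons x w)
  have "bword_img s q (x # w) = nc_mult (bgen_img s q x) (bword_img s q w)" by (simp add: bword_img_def)
  then show ?case using Cons by (simp add: gimg_ok lookup_times_nc)
qed

type_synonym hb = "bgen list \<Rightarrow>\<^sub>0 complex"

definition PhB :: "real \<Rightarrow> real \<Rightarrow> hb \<Rightarrow> hp" where
  "PhB s q F = (\<Sum>w\<in>Poly_Mapping.keys F. sc (Poly_Mapping.lookup F w) * BWr s q w)"

lemma bincl_ok: "bincl s q (Poly_Mapping.lookup F) = lk (PhB s q F)"
  by (rule ext) (simp add: bincl_def PhB_def keys_eq[symmetric] lk_sum lk_sc_mult bword_ok)

lemma PhB_superset: "finite SS \<Longrightarrow> Poly_Mapping.keys F \<subseteq> SS \<Longrightarrow> PhB s q F = (\<Sum>w\<in>SS. sc (Poly_Mapping.lookup F w) * BWr s q w)"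
  unfolding PhB_def by (rule sum.mono_neutral_left) (auto simp: in_keys_iff)

lemma PhB_add: "PhB s q (F + F2) = PhB s q F + PhB s q F2"
proof -
  let ?S = "Poly_Mapping.keys F \<union> Poly_Mapping.keys F2"
  have "PhB s q (F + F2) = (\<Sum>w\<in>?S. sc (Poly_Mapping.lookup (F + F2) w) * BWr s q w)"
    by (rule PhB_superset) (auto simp: keys_add)
  also have "\<dots> = (\<Sum>w\<in>?S. sc (Poly_Mapping.lookup F w) * BWr s q w) + (\<Sum>w\<in>?S. sc (Poly_Mapping.lookup F2 w) * BWr s q w)"
    by (simp add: lookup_add single_add distrib_right sum.distrib)
  also have "\<dots> = PhB s q F + PhB s q F2"
    by (simp add: PhB_superset[symmetric])
  finally show ?thesis .
qed

lemma PhB_zero[simp]: "PhB s q 0 = 0" by (simp add: PhB_def)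

lemma PhB_single: "PhB s q (Poly_Mapping.single w c) = sc c * BWr s q w"
  by (cases "c = 0") (simp_all add: PhB_def)

lemma PhB_sum: "finite I \<Longrightarrow> PhB s q (sum f I) = (\<Sum>i\<in>I. PhB s q (f i))"
  by (induction I rule: finite_induct) (simp_all add: PhB_add)

definition pe :: "hgen list \<Rightarrow> complex" where "pe w = prod_list (map eps_gen w)"

definition epsR :: "hp \<Rightarrow> complex" where "epsR X = hcounit (lk X)"

lemma epsR_superset: "finite SS \<Longrightarrow> Poly_Mapping.keys X \<subseteq> SS \<Longrightarrow> epsR X = (\<Sum>w\<in>SS. lk X w * pe w)"
  unfolding epsR_def hcounit_def pe_def keys_eq[symmetric]
  by (rule sum.mono_neutral_left) (auto simp: in_keys_iff)

lemma epsR_add: "epsR (X + Y) = epsR X + epsR Y"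
proof -
  let ?S = "Poly_Mapping.keys X \<union> Poly_Mapping.keys Y"
  have "epsR (X + Y) = (\<Sum>w\<in>?S. lk (X + Y) w * pe w)" by (rule epsR_superset) (auto simp: keys_add)
  also have "\<dots> = (\<Sum>w\<in>?S. lk X w * pe w) + (\<Sum>w\<in>?S. lk Y w * pe w)"
    by (simp add: lookup_add distrib_right sum.distrib)
  also have "\<dots> = epsR X + epsR Y" by (simp add: epsR_superset[symmetric])
  finally show ?thesis .
qed

lemma epsR_zero[simp]: "epsR 0 = 0" by (simp add: epsR_def hcounit_def)

lemma epsR_sum: "finite I \<Longrightarrow> epsR (sum f I) = (\<Sum>i\<in>I. epsR (f i))"
  by (induction I rule: finite_induct) (simp_all add: epsR_add)

lemma epsR_sg: "epsR (sg w c) = c * pe w"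
  by (cases "c = 0") (simp_all add: epsR_superset[of "{w}"])

lemma pe_append: "pe (u @ v) = pe u * pe v" by (simp add: pe_def)

lemma epsR_mult: "epsR (X * Y) = epsR X * epsR Y"
proof -
  have "X * Y = (\<Sum>a\<in>Poly_Mapping.keys X. \<Sum>b\<in>Poly_Mapping.keys Y. sg (a @ b) (lk X a * lk Y b))"
    apply (subst pm_expand[of X], subst pm_expand[of Y])
    apply (simp add: sum_distrib_left sum_distrib_right sg_mult)
    by (rule sum.swap)
  then have "epsR (X * Y) = (\<Sum>a\<in>Poly_Mapping.keys X. \<Sum>b\<in>Poly_Mapping.keys Y. lk X a * lk Y b * (pe a * pe b))"
    by (simp add: epsR_sum epsR_sg pe_append)
  also have "\<dots> = (\<Sum>a\<in>Poly_Mapping.keys X. lk X a * pe a) * (\<Sum>b\<in>Poly_Mapping.keys Y. lk Y b * pe b)"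
    by (simp add: sum_product ac_simps)
  also have "\<dots> = epsR X * epsR Y" by (simp add: epsR_superset[symmetric])
  finally show ?thesis .
qed

lemma epsR_sc: "epsR (sc c) = c" by (simp add: epsR_sg pe_def)

lemma epsR_pE: "epsR (pE X p) = poly p (epsR X)"
  by (induction p) (simp_all add: pE_pCons epsR_add epsR_mult epsR_sc)

lemma epsR_K: "epsR (Kr s q) = 0"
  by (simp add: Kr_def epsR_add epsR_sg pe_def)




lemma has_sum_diff':
  fixes f g :: "'a \<Rightarrow> complex"
  assumes "(f has_sum a) A" "(g has_sum b) A"
  shows "((\<lambda>x. f x - g x) has_sum (a - b)) A"
proof -
  have "((\<lambda>x. - g x) has_sum (- b)) A" using assms(2) by (simp add: has_sum_uminus)
  from has_sum_add[OF assms(1) this] show ?thesis by simp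
qed

lemma has_sum_fsum:
  fixes f :: "'i \<Rightarrow> 'a \<Rightarrow> complex"
  assumes "finite I" "\<And>i. i \<in> I \<Longrightarrow> (f i has_sum a i) A"
  shows "((\<lambda>x. \<Sum>i\<in>I. f i x) has_sum (\<Sum>i\<in>I. a i)) A"
  using assms by (induction I rule: finite_induct) (auto intro: has_sum_add)

lemma geom_has_sum:
  fixes z :: complex
  assumes "norm z < 1"
  shows "((\<lambda>n. z ^ n) has_sum (1 / (1 - z))) (UNIV :: nat set)"
proof (rule norm_summable_imp_has_sum)
  show "summable (\<lambda>n. norm (z ^ n))" using assms by (simp add: norm_power summable_geometric)
  show "(\<lambda>n. z ^ n) sums (1 / (1 - z))" using geometric_sums[OF assms] by simp
qed

lemma infsum_point:
  fixes f :: "nat \<Rightarrow> complex"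
  assumes "\<And>k. k \<noteq> m \<Longrightarrow> f k = 0"
  shows "infsum f UNIV = f m"
proof -
  have "infsum f UNIV = infsum f {m}" by (rule infsum_cong_neutral) (use assms in auto)
  then show ?thesis by simp
qed

definition diagm :: "(nat \<Rightarrow> complex) \<Rightarrow> imat" where "diagm d = (\<lambda>m n. if m = n then d n else 0)"

lemma mat_mult_diag: "mat_mult (diagm d) (diagm e) = diagm (\<lambda>n. d n * e n)"
proof (rule ext, rule ext)
  fix m n
  have "infsum (\<lambda>k. diagm d m k * diagm e k n) UNIV = diagm d m m * diagm e m n"
    by (rule infsum_point) (simp add: diagm_def)
  then show "mat_mult (diagm d) (diagm e) m n = diagm (\<lambda>n. d n * e n) m n"
    by (simp add: mat_mult_def diagm_def)
qed

lemma rep_word_K: "rep_word (diagm d) TL (replicate i Kg) = diagm (\<lambda>n. d n ^ i)"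
proof (induction i)
  case 0 then show ?case by (simp add: rep_word_def mat_id_def diagm_def)
next
  case (Suc i)
  have "rep_word (diagm d) TL (replicate (Suc i) Kg) = mat_mult (diagm d) (rep_word (diagm d) TL (replicate i Kg))"
    by (simp add: rep_word_def)
  then show ?case using Suc by (simp add: mat_mult_diag)
qed

lemma rep_word_K_diag: "rep_word (diagm d) TL (replicate i Kg) n n = d n ^ i"
  by (simp only: rep_word_K) (simp add: diagm_def)

definition pKB :: "complex poly \<Rightarrow> hb" where
  "pKB p = (\<Sum>i\<le>degree p. Poly_Mapping.single (replicate i Kg) (coeff p i))"

lemma lookup_pKB_rep: "i \<le> degree p \<Longrightarrow> Poly_Mapping.lookup (pKB p) (replicate i Kg) = coeff p i"
proof -
  assume i: "i \<le> degree p"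
  have "Poly_Mapping.lookup (pKB p) (replicate i Kg) = (\<Sum>k\<le>degree p. (if replicate k Kg = replicate i Kg then coeff p k else 0))"
    by (simp add: pKB_def lookup_sum lookup_single when_def)
  also have "\<dots> = (\<Sum>k\<le>degree p. (if k = i then coeff p k else 0))" by (rule sum.cong) auto
  also have "\<dots> = coeff p i" using i by simp
  finally show ?thesis .
qed

lemma keys_pKB: "{w. Poly_Mapping.lookup (pKB p) w \<noteq> 0} \<subseteq> (\<lambda>i. replicate i Kg) ` {..degree p}"
proof
  fix w assume "w \<in> {w. Poly_Mapping.lookup (pKB p) w \<noteq> 0}"
  then have "(\<Sum>k\<le>degree p. (if replicate k Kg = w then coeff p k else 0)) \<noteq> 0"
    by (simp add: pKB_def lookup_sum lookup_single when_def)
  then obtain k where k: "k \<in> {..degree p}" "(if replicate k Kg = w then coeff p k else 0) \<noteq> 0"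
    by (rule sum.not_neutral_contains_not_neutral)
  then have "k \<le> degree p" "replicate k Kg = w" by (auto split: if_splits)
  then show "w \<in> (\<lambda>i. replicate i Kg) ` {..degree p}" by auto
qed

lemma rep_pKB: "rep (diagm d) TL (Poly_Mapping.lookup (pKB p)) n n = poly p (d n)"
proof -
  let ?SS = "(\<lambda>i. replicate i Kg) ` {..degree p}"
  let ?f = "Poly_Mapping.lookup (pKB p)"
  have "rep (diagm d) TL ?f n n = (\<Sum>w | ?f w \<noteq> 0. ?f w * rep_word (diagm d) TL w n n)"
    by (simp add: rep_def)
  also have "\<dots> = (\<Sum>w\<in>?SS. ?f w * rep_word (diagm d) TL w n n)"
    by (rule sum.mono_neutral_left) (use keys_pKB in auto)
  also have "\<dots> = (\<Sum>i\<le>degree p. ?f (replicate i Kg) * rep_word (diagm d) TL (replicate i Kg) n n)"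
    by (subst sum.reindex) (auto simp: inj_on_def)
  also have "\<dots> = (\<Sum>i\<le>degree p. coeff p i * d n ^ i)"
    by (rule sum.cong[OF refl]) (simp add: lookup_pKB_rep rep_word_K_diag)
  also have "\<dots> = poly p (d n)" by (simp add: poly_altdef)
  finally show ?thesis .
qed

lemma piK_minus_diag: "piK_minus s q = diagm (\<lambda>n. complex_of_real (- (s ^ 2 * q ^ (2 * n))))"
  by (simp only: piK_minus_def diagm_def)
lemma piK_plus_diag: "piK_plus s q = diagm (\<lambda>n. complex_of_real (q ^ (2 * n)))"
  by (simp only: piK_plus_def diagm_def)

lemma trpi_pKB:
  assumes q0: "0 < q" and q1: "q < 1"
  shows "trpi s q (Poly_Mapping.lookup (pKB p)) = Tr s q p"
proof -
  let ?Sc = "complex_of_real s"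
  let ?z = "\<lambda>i. complex_of_real ((q ^ 2) ^ i)"
  have term_eq: "poly p (complex_of_real (- (s ^ 2 * q ^ (2 * n)))) - poly p (complex_of_real (q ^ (2 * n)))
      = (\<Sum>i\<le>degree p. coeff p i * ((- (?Sc ^ 2)) ^ i - 1) * ?z i ^ n)" for n
  proof -
    have pc: "(x ^ n) ^ i = (x ^ i) ^ n" for x :: complex and i by (metis power_mult mult.commute)
    have a: "complex_of_real (- (s ^ 2 * q ^ (2 * n))) ^ i = (- (?Sc ^ 2)) ^ i * ?z i ^ n" for i
    proof -
      have "complex_of_real (- (s ^ 2 * q ^ (2 * n))) = (- (?Sc ^ 2)) * complex_of_real (q ^ 2) ^ n"
        by (simp add: power_mult)
      then show ?thesis by (simp only: power_mult_distrib pc of_real_power)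
    qed
    have b: "complex_of_real (q ^ (2 * n)) ^ i = ?z i ^ n" for i
    proof -
      have "complex_of_real (q ^ (2 * n)) = complex_of_real (q ^ 2) ^ n" by (simp add: power_mult)
      then show ?thesis by (simp only: pc of_real_power)
    qed
    have "poly p (complex_of_real (- (s ^ 2 * q ^ (2 * n)))) - poly p (complex_of_real (q ^ (2 * n)))
      = (\<Sum>i\<le>degree p. coeff p i * ((- (?Sc ^ 2)) ^ i * ?z i ^ n) - coeff p i * ?z i ^ n)"
      by (simp only: poly_altdef a b sum_subtractf)
    also have "\<dots> = (\<Sum>i\<le>degree p. coeff p i * ((- (?Sc ^ 2)) ^ i - 1) * ?z i ^ n)"
      by (rule sum.cong[OF refl]) (simp add: algebra_simps)
    finally show ?thesis .
  qed
  have hs: "((\<lambda>n. coeff p i * ((- (?Sc ^ 2)) ^ i - 1) * ?z i ^ n) has_sum (coeff p i * G s q i)) UNIV" for i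
  proof (cases "i = 0")
    case True
    then show ?thesis by (simp add: Gzero[OF q0 q1])
  next
    case False
    have lt1: "q ^ 2 < 1" using q0 q1 by (simp add: power_less_one_iff)
    have lt: "(q ^ 2) ^ i < 1" using lt1 False q0 by (simp add: power_less_one_iff)
    have "norm (?z i) = (q ^ 2) ^ i" by (simp only: norm_of_real) simp
    then have nz: "norm (?z i) < 1" using lt by simp
    define c where "c = coeff p i * ((- (?Sc ^ 2)) ^ i - 1)"
    have g: "((\<lambda>n. ?z i ^ n) has_sum (1 / (1 - ?z i))) UNIV" by (rule geom_has_sum[OF nz])
    have "((\<lambda>n. c * ?z i ^ n) has_sum (c * (1 / (1 - ?z i)))) UNIV" by (rule has_sum_cmult_right[OF g])
    moreover have "c * (1 / (1 - ?z i)) = coeff p i * G s q i"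
      by (simp add: c_def G_def[OF q0 q1])
    ultimately show ?thesis by (simp add: c_def)
  qed
  have "((\<lambda>n. pi_minus s q (Poly_Mapping.lookup (pKB p)) n n - pi_plus s q (Poly_Mapping.lookup (pKB p)) n n) has_sum Tr s q p) UNIV"
  proof -
    have hsum: "((\<lambda>n. \<Sum>i\<le>degree p. coeff p i * ((- (?Sc ^ 2)) ^ i - 1) * ?z i ^ n) has_sum (\<Sum>i\<le>degree p. coeff p i * G s q i)) UNIV"
      by (rule has_sum_fsum) (simp, rule hs)
    have eqn: "pi_minus s q (Poly_Mapping.lookup (pKB p)) n n - pi_plus s q (Poly_Mapping.lookup (pKB p)) n n
        = (\<Sum>i\<le>degree p. coeff p i * ((- (?Sc ^ 2)) ^ i - 1) * ?z i ^ n)" for n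
      by (simp only: pi_minus_def pi_plus_def piK_minus_diag piK_plus_diag rep_pKB term_eq)
    have "(\<lambda>n. pi_minus s q (Poly_Mapping.lookup (pKB p)) n n - pi_plus s q (Poly_Mapping.lookup (pKB p)) n n)
        = (\<lambda>n. \<Sum>i\<le>degree p. coeff p i * ((- (?Sc ^ 2)) ^ i - 1) * ?z i ^ n)"
      by (rule ext) (rule eqn)
    then show ?thesis unfolding Tr_def[OF q0 q1] using hsum by (simp only:)
  qed
  then show ?thesis unfolding trpi_def by (rule infsumI)
qed




definition e21 :: "complex poly \<Rightarrow> nat \<Rightarrow> hb" where
  "e21 C N = (\<Sum>i\<le>degree C. Poly_Mapping.single (replicate i Kg @ replicate N LgS) (coeff C i))"

lemma PhB_pKB: "PhB s q (pKB p) = pE (Kr s q) p"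
  by (simp add: pKB_def PhB_sum PhB_single BWr_rep pE_def)

lemma PhB_e21: "PhB s q (e21 C N) = pE (Kr s q) C * Lsr s q ^ N"
  by (simp add: e21_def PhB_sum PhB_single BWr_rep BWr_append pE_def sum_distrib_right mult.assoc)

lemma PhB_L: "PhB s q (Poly_Mapping.single (replicate N Lg) 1) = Lr s q ^ N"
  by (simp add: PhB_single BWr_rep sc_1)

lemma pKB_1: "PhB s q (pKB 1) = 1" by (simp add: PhB_pKB pE_1)

lemma sum_two: "(\<Sum>k<Suc (Suc m). f k) = f 0 + f 1 + (\<Sum>k<m. f (Suc (Suc k)))"
  by (simp only: sum.lessThan_Suc_shift) (simp add: add.assoc)

lemma matrix_idem:
  fixes HH :: "nat \<Rightarrow> nat \<Rightarrow> hp" and n :: nat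
  assumes n2: "2 \<le> n"
    and off: "\<And>i j. \<not> (i < 2 \<and> j < 2) \<Longrightarrow> HH i j = (if i = j then 1 else 0)"
    and blk: "\<And>i j. i < 2 \<Longrightarrow> j < 2 \<Longrightarrow> cg q (HH i 0 * HH 0 j + HH i 1 * HH 1 j) (HH i j)"
    and ij: "i < n" "j < n"
  shows "cg q (\<Sum>k<n. HH i k * HH k j) (HH i j)"
proof (cases "i < 2")
  case True
  show ?thesis
  proof (cases "j < 2")
    case True2: True
    have "(\<Sum>k<n. HH i k * HH k j) = (\<Sum>k\<in>{0,1}. HH i k * HH k j)"
      by (rule sum.mono_neutral_right) (use n2 True off in auto)
    also have "\<dots> = HH i 0 * HH 0 j + HH i 1 * HH 1 j" by simp
    finally show ?thesis using blk[OF True True2] by simp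
  next
    case False
    have "(\<Sum>k<n. HH i k * HH k j) = (\<Sum>k\<in>{j}. HH i k * HH k j)"
      by (rule sum.mono_neutral_right) (use ij False off in auto)
    also have "\<dots> = HH i j" using False off[of j j] by simp
    finally show ?thesis by simp
  qed
next
  case False
  have "(\<Sum>k<n. HH i k * HH k j) = (\<Sum>k\<in>{i}. HH i k * HH k j)"
    by (rule sum.mono_neutral_right) (use ij False off in auto)
  also have "\<dots> = HH i j" using False off[of i i] by simp
  finally show ?thesis by simp
qed

theorem corollary3p4:
  fixes q s :: real
  assumes "0 < q" and "q < 1" and "0 \<le> s" and "s \<le> 1"
  shows "\<forall>a b :: int. a \<ge> 1 \<longrightarrow>
           (\<exists>(n::nat) (E :: nat \<Rightarrow> nat \<Rightarrow> bgen ncpoly).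
              B_idempotent s q n E \<and>
              (\<Sum>i<n. hcounit (bincl s q (E i i))) = of_int a \<and>
              (\<Sum>i<n. trpi s q (E i i)) = of_int b)"
proof (intro allI impI)
  fix a b :: int
  assume a1: "a \<ge> 1"
  note q0 = assms(1) and q1 = assms(2)
  define N where "N = nat \<bar>b\<bar>"
  define pos where "pos = (b \<ge> 0)"
  obtain A W where AW: "A * (1 - A) = W * PhiN s q N"
    and vals: "\<forall>j\<in>{1..N}. poly A (inverse (complex_of_real q ^ 2) ^ j) = (if pos then 1 else 0) \<and>
        poly A (- (complex_of_real s ^ 2) * inverse (complex_of_real q ^ 2) ^ j) = (if pos then 0 else 1)"
    using exists_A[OF q0 q1, of s N pos] by blast
  define r where "r = inverse (complex_of_real q ^ 2) ^ N"
  define C where "C = scl r W"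
  define D where "D = 1 - scl r A"
  define m where "m = nat a - 1"
  define n where "n = Suc (Suc m)"
  define eb where "eb i j = (if i = 0 then (if j = 0 then pKB A else Poly_Mapping.single (replicate N Lg) 1)
                            else (if j = 0 then e21 C N else pKB D))" for i j :: nat
  define EB where "EB i j = (if i < 2 \<and> j < 2 then eb i j else if i = j then pKB 1 else 0)" for i j
  define E where "E i j = Poly_Mapping.lookup (EB i j)" for i j
  define hb where "hb i j = (if i = 0 then (if j = 0 then pE (Kr s q) A else Lr s q ^ N)
                            else (if j = 0 then pE (Kr s q) C * Lsr s q ^ N else pE (Kr s q) D))" for i j :: nat
  define HH where "HH i j = (if i < 2 \<and> j < 2 then hb i j else if i = j then 1 else 0)" for i j
  have PH: "PhB s q (EB i j) = HH i j" for i j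
    by (simp add: EB_def HH_def eb_def hb_def PhB_pKB PhB_e21 PhB_L pKB_1 pE_1)
  have binclE: "bincl s q (E i j) = lk (HH i j)" for i j
    by (simp add: E_def bincl_ok PH)
  have n2: "2 \<le> n" by (simp add: n_def)
  have off: "\<And>i j. \<not> (i < 2 \<and> j < 2) \<Longrightarrow> HH i j = (if i = j then 1 else 0)"
    by (auto simp: HH_def)
  have blk: "cg q (HH i 0 * HH 0 j + HH i 1 * HH 1 j) (HH i j)" if "i < 2" "j < 2" for i j
  proof -
    have c: "i = 0 \<or> i = 1" "j = 0 \<or> j = 1" using that by auto
    note I = idem[OF q0 AW, folded r_def, folded C_def D_def]
    show ?thesis using c I by (auto simp: HH_def hb_def)
  qed
  have idem_ok: "cg q (\<Sum>k<n. HH i k * HH k j) (HH i j)" if "i < n" "j < n" for i j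
    by (rule matrix_idem[OF n2 off blk that]) auto
  have Bi: "B_idempotent s q n E"
    unfolding B_idempotent_def
  proof (intro conjI allI impI)
    fix i j assume "i < n" "j < n"
    show "fin_supp (E i j)" by (simp add: fin_supp_def E_def)
  next
    fix i j assume ij: "i < n" "j < n"
    have "nc_sub (\<lambda>w. \<Sum>k<n. nc_mult (bincl s q (E i k)) (bincl s q (E k j)) w) (bincl s q (E i j))
          = lk ((\<Sum>k<n. HH i k * HH k j) - HH i j)"
      by (rule ext) (simp add: nc_sub_def binclE lk_minus lk_sum lookup_times_nc)
    moreover have "(\<Sum>k<n. HH i k * HH k j) - HH i j \<in> Jr q" using idem_ok[OF ij] by (simp add: cg_def)
    ultimately show "nc_sub (\<lambda>w. \<Sum>k<n. nc_mult (bincl s q (E i k)) (bincl s q (E k j)) w) (bincl s q (E i j)) \<in> suq_ideal q"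
      using Jr_sound by simp
  qed
  have EB_diag: "EB i i = (if i = 0 then pKB A else if i = 1 then pKB D else pKB 1)" for i
    by (simp add: EB_def eb_def)
  have eps_sum: "(\<Sum>i<n. hcounit (bincl s q (E i i))) = of_int a"
  proof -
    have h: "hcounit (bincl s q (E i i)) = (if i = 0 then coeff A 0 else if i = 1 then coeff D 0 else 1)" for i
      by (simp add: E_def EB_diag bincl_ok PhB_pKB epsR_def[symmetric] epsR_pE epsR_K poly_0_coeff_0)
    have "(\<Sum>i<n. hcounit (bincl s q (E i i))) = coeff A 0 + coeff D 0 + of_nat m"
      unfolding n_def sum_two h by simp
    also have "coeff D 0 = 1 - coeff A 0" by (simp add: D_def coeff_scl)
    finally have "(\<Sum>i<n. hcounit (bincl s q (E i i))) = 1 + of_nat m" by simp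
    also have "\<dots> = of_int a"
    proof -
      have sm: "Suc m = nat a" using a1 by (simp add: m_def)
      have "(1::complex) + of_nat m = of_nat (Suc m)" by simp
      also have "\<dots> = of_nat (nat a)" by (simp only: sm)
      also have "\<dots> = of_int a" using a1 by simp
      finally show ?thesis .
    qed
    finally show ?thesis .
  qed
  have tr_sum: "(\<Sum>i<n. trpi s q (E i i)) = of_int b"
  proof -
    have Tr1: "Tr s q 1 = 0" by (simp add: Tr_def[OF q0 q1] Gzero[OF q0 q1])
    have h: "trpi s q (E i i) = (if i = 0 then Tr s q A else if i = 1 then Tr s q D else 0)" for i
      by (simp add: E_def EB_diag trpi_pKB[OF q0 q1] Tr1)
    have "(\<Sum>i<n. trpi s q (E i i)) = Tr s q A + Tr s q D"
      unfolding n_def sum_two h by simp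
    also have "\<dots> = (\<Sum>j\<in>{1..N}. poly A (inverse (complex_of_real q ^ 2) ^ j) -
         poly A (- (complex_of_real s ^ 2) * inverse (complex_of_real q ^ 2) ^ j))"
      unfolding D_def r_def by (rule trace_sum[OF q0 q1])
    also have "\<dots> = (\<Sum>j\<in>{1..N}. (if pos then 1 else -1))"
    proof (rule sum.cong[OF refl])
      fix j assume j: "j \<in> {1..N}"
      have v1: "poly A (inverse (complex_of_real q ^ 2) ^ j) = (if pos then 1 else 0)" using vals j by blast
      have v2: "poly A (- (complex_of_real s ^ 2) * inverse (complex_of_real q ^ 2) ^ j) = (if pos then 0 else 1)"
        using vals j by blast
      show "poly A (inverse (complex_of_real q ^ 2) ^ j) - poly A (- (complex_of_real s ^ 2) * inverse (complex_of_real q ^ 2) ^ j)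
          = (if pos then 1 else -1)" by (simp only: v1 v2) simp
    qed
    also have "\<dots> = of_int b"
    proof (cases pos)
      case True
      then have "b \<ge> 0" by (simp add: pos_def)
      then show ?thesis using True by (simp add: N_def)
    next
      case False
      then have "b < 0" by (simp add: pos_def)
      then show ?thesis using False by (simp add: N_def)
    qed
    finally show ?thesis .
  qed
  show "\<exists>(n::nat) (E :: nat \<Rightarrow> nat \<Rightarrow> bgen ncpoly).
              B_idempotent s q n E \<and>
              (\<Sum>i<n. hcounit (bincl s q (E i i))) = of_int a \<and>
              (\<Sum>i<n. trpi s q (E i i)) = of_int b"
    using Bi eps_sum tr_sum by blast
qed


end
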